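(* Let $\phi(x,z)$ be an associate of the additive formal group, $V$ a nonlocal vertex algebra and $(W,Y_W)$ a $\phi$-coordinated quasi $V$-module. Let $u,v\in V$ and suppose $q(x_1,x_2)\in\mathbb{C}[[x_1,x_2]]$ satisfies $q(x_1,x_2)Y_W(u,x_1)Y_W(v,x_2)\in\mathrm{Hom}(W,W((x_1,x_2)))$. Then $$q(\phi(x_2,x_0),x_2)Y_W(Y(u,x_0)v,x_2)=\big(q(x_1,x_2)Y_W(u,x_1)Y_W(v,x_2)\big)|_{x_1=\phi(x_2,x_0)}.$$
   Context: An associate is $\phi(x,z)\in\mathbb{C}((x))[[z]]$ with $\phi(x,0)=x$ and $\phi(\phi(x,x_2),x_0)=\phi(x,x_0+x_2)$. Substitutions $x_1=\phi(x_2,x_0)$ into power series in $x_1,x_2$ or into elements of $\mathrm{Hom}(W,W((x_1,x_2)))$ give elements of $\mathbb{C}((x_2))[[x_0]]$ resp. $\mathrm{Hom}(W,W((x_2)))[[x_0]]$. A nonlocal vertex algebra: $(V,Y,\mathbf1)$ with $Y:V\to\mathrm{Hom}(V,V((x)))$, $Y(\mathbf1,x)=1$, $Y(v,x)\mathbf1\in V[[x]]$ with constant term $v$, and for $u,v,w$ some $l$ with $(x_0+x_2)^lY(u,x_0+x_2)Y(v,x_2)w=(x_0+x_2)^lY(Y(u,x_0)v,x_2)w$. A $\phi$-coordinated quasi $V$-module: $W$ with $Y_W:V\to\mathrm{Hom}(W,W((x)))$, $Y_W(\mathbf1,x)=1_W$, such that for $u,v\in V$ there exists $p(x,y)\in\mathbb{C}[[x,y]]$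 with $p(\phi(x,z),x)\ne0$, $p(x_1,x_2)Y_W(u,x_1)Y_W(v,x_2)\in\mathrm{Hom}(W,W((x_1,x_2)))$ and $p(\phi(x_2,x_0),x_2)Y_W(Y(u,x_0)v,x_2)=(p(x_1,x_2)Y_W(u,x_1)Y_W(v,x_2))|_{x_1=\phi(x_2,x_0)}$. *)

theory Defs
  imports "HOL-Computational_Algebra.Formal_Laurent_Series" "HOL-Library.Groups_Big_Fun"
begin

(* C((x))[[z]]   = complex fls fps   (an associate phi(x,z) lives here).
   A (vector-space valued) formal series is represented by its coefficient
   function; coefficients are indexed by the exponent (not by the mode index):
     Y u v n        = coefficient of x^n in Y(u,x)v,
     YW u w n       = coefficient of x^n in Y_W(u,x)w.
   Infinite formal sums whose coefficients are (provably) finite sums are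
   written with Sum_any (sum over the finite support). *)

(* phi(x,z)^m in C((x))[[z]] for an integer m (phi has invertible constant
   term x, so negative powers exist in C((x))[[z]]) *)
definition phi_pow :: "complex fls fps \<Rightarrow> int \<Rightarrow> complex fls fps" where
  "phi_pow \<phi> m = (if 0 \<le> m then \<phi> ^ nat m else inverse \<phi> ^ nat (- m))"

definition phi_coeff :: "complex fls fps \<Rightarrow> nat \<Rightarrow> int \<Rightarrow> int \<Rightarrow> complex" where
  "phi_coeff \<phi> k m j = fls_nth (fps_nth (phi_pow \<phi> m) k) j"

(* phi is an associate of the additive formal group:
   phi(x,0) = x  and  phi(phi(x,x2),x0) = phi(x,x0+x2).
   Coefficient of x0^i x2^j x^p on the left:  sum_m a_{i,m} [x2^j x^p] phi(x,x2)^m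
   (where phi(x,z) = sum_i a_i(x) z^i, a_i(x) = sum_m a_{i,m} x^m);
   on the right: binom(i+j,i) a_{i+j,p}. *)
definition is_associate :: "complex fls fps \<Rightarrow> bool" where
  "is_associate \<phi> \<longleftrightarrow>
     fps_nth \<phi> 0 = fls_X \<and>
     (\<forall>i j p. Sum_any (\<lambda>m. fls_nth (fps_nth \<phi> i) m * phi_coeff \<phi> j m p)
              = of_nat ((i + j) choose i) * fls_nth (fps_nth \<phi> (i + j)) p)"

(* f :: int => 'a lies in A((x)) (finitely many negative powers) *)
definition lower_trunc :: "(int \<Rightarrow> 'a::zero) \<Rightarrow> bool" where
  "lower_trunc f \<longleftrightarrow> (\<exists>N. \<forall>n<N. f n = 0)"

(* F :: int => int => 'a lies in A((x1,x2)) *)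
definition lower_trunc2 :: "(int \<Rightarrow> int \<Rightarrow> 'a::zero) \<Rightarrow> bool" where
  "lower_trunc2 F \<longleftrightarrow> (\<exists>N. \<forall>m n. m < N \<or> n < N \<longrightarrow> F m n = 0)"

definition nonlocal_va ::
  "(complex \<Rightarrow> 'v::ab_group_add \<Rightarrow> 'v) \<Rightarrow> ('v \<Rightarrow> 'v \<Rightarrow> int \<Rightarrow> 'v) \<Rightarrow> 'v \<Rightarrow> bool" where
  "nonlocal_va scV Y one \<longleftrightarrow>
     Vector_Spaces.vector_space scV \<and>
     (\<forall>v n. Vector_Spaces.linear scV scV (\<lambda>u. Y u v n)) \<and>
     (\<forall>u n. Vector_Spaces.linear scV scV (\<lambda>v. Y u v n)) \<and>
     (\<forall>u v. lower_trunc (Y u v)) \<and>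
     (\<forall>v n. Y one v n = (if n = 0 then v else 0)) \<and>
     (\<forall>v n. n < 0 \<longrightarrow> Y v one n = 0) \<and>
     (\<forall>v. Y v one 0 = v) \<and>
     (\<forall>u v w. \<exists>l::nat. \<forall>a b::int.
        \<comment> \<open>coefficient of x0^a x2^b in (x0+x2)^l Y(u,x0+x2)Y(v,x2)w\<close>
        Sum_any (\<lambda>i::nat. scV ((of_int (a + int i) :: complex) gchoose i)
                              (Y u (Y v w (b - int i)) (a + int i - int l)))
        \<comment> \<open>coefficient of x0^a x2^b in (x0+x2)^l Y(Y(u,x0)v,x2)w\<close>
      = (\<Sum>i\<le>l. scV (of_nat (l choose i)) (Y (Y u v (a - int (l - i))) w (b - int i))))"

(* coefficient of x1^m x2^n in q(x1,x2) Y_W(u,x1) Y_W(v,x2) w,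
   q i j = coefficient of x1^i x2^j in q \<in> C[[x1,x2]] *)
definition qYY ::
  "(complex \<Rightarrow> 'w::ab_group_add \<Rightarrow> 'w) \<Rightarrow> (nat \<Rightarrow> nat \<Rightarrow> complex) \<Rightarrow> ('v \<Rightarrow> 'w \<Rightarrow> int \<Rightarrow> 'w)
   \<Rightarrow> 'v \<Rightarrow> 'v \<Rightarrow> 'w \<Rightarrow> int \<Rightarrow> int \<Rightarrow> 'w" where
  "qYY scW q YW u v w m n =
     Sum_any (\<lambda>(i::nat, j::nat). scW (q i j) (YW u (YW v w (n - int j)) (m - int i)))"

(* coefficient of x0^k x2^p in q(phi(x2,x0),x2) \<in> C((x2))[[x0]] *)
definition q_subst :: "complex fls fps \<Rightarrow> (nat \<Rightarrow> nat \<Rightarrow> complex) \<Rightarrow> nat \<Rightarrow> int \<Rightarrow> complex" where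
  "q_subst \<phi> q k p = Sum_any (\<lambda>(i::nat, j::nat). q i j * phi_coeff \<phi> k (int i) (p - int j))"

(* coefficient of x0^k x2^p in F(x1,x2)|_{x1 = phi(x2,x0)} for F \<in> W((x1,x2)),
   F m n = coefficient of x1^m x2^n *)
definition subst_phi ::
  "(complex \<Rightarrow> 'w::ab_group_add \<Rightarrow> 'w) \<Rightarrow> complex fls fps \<Rightarrow> (int \<Rightarrow> int \<Rightarrow> 'w) \<Rightarrow> nat \<Rightarrow> int \<Rightarrow> 'w" where
  "subst_phi scW \<phi> F k p = Sum_any (\<lambda>(m::int, n::int). scW (phi_coeff \<phi> k m (p - n)) (F m n))"

(* coefficient of x0^a x2^b in q(phi(x2,x0),x2) Y_W(Y(u,x0)v,x2) w \<in> W((x2))((x0)) *)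
definition qYW_Y ::
  "(complex \<Rightarrow> 'w::ab_group_add \<Rightarrow> 'w) \<Rightarrow> complex fls fps \<Rightarrow> (nat \<Rightarrow> nat \<Rightarrow> complex)
   \<Rightarrow> ('v \<Rightarrow> 'v \<Rightarrow> int \<Rightarrow> 'v) \<Rightarrow> ('v \<Rightarrow> 'w \<Rightarrow> int \<Rightarrow> 'w) \<Rightarrow> 'v \<Rightarrow> 'v \<Rightarrow> 'w \<Rightarrow> int \<Rightarrow> int \<Rightarrow> 'w" where
  "qYW_Y scW \<phi> q Y YW u v w a b =
     Sum_any (\<lambda>(k::nat, p::int). scW (q_subst \<phi> q k p) (YW (Y u v (a - int k)) w (b - p)))"

(* the identity  q(phi(x2,x0),x2) Y_W(Y(u,x0)v,x2) = (q(x1,x2) Y_W(u,x1)Y_W(v,x2))|_{x1=phi(x2,x0)}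
   (as maps W -> W((x2))((x0)); the right side has no negative powers of x0) *)
definition assoc_identity ::
  "(complex \<Rightarrow> 'w::ab_group_add \<Rightarrow> 'w) \<Rightarrow> complex fls fps \<Rightarrow> (nat \<Rightarrow> nat \<Rightarrow> complex)
   \<Rightarrow> ('v \<Rightarrow> 'v \<Rightarrow> int \<Rightarrow> 'v) \<Rightarrow> ('v \<Rightarrow> 'w \<Rightarrow> int \<Rightarrow> 'w) \<Rightarrow> 'v \<Rightarrow> 'v \<Rightarrow> bool" where
  "assoc_identity scW \<phi> q Y YW u v \<longleftrightarrow>
     (\<forall>w a b. qYW_Y scW \<phi> q Y YW u v w a b
        = (if a < 0 then 0 else subst_phi scW \<phi> (qYY scW q YW u v w) (nat a) b))"

definition phi_quasi_module ::
  "complex fls fps \<Rightarrow> ('v \<Rightarrow> 'v \<Rightarrow> int \<Rightarrow> 'v) \<Rightarrow> 'v \<Rightarrow> (complex \<Rightarrow> 'v::ab_group_add \<Rightarrow> 'v)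
   \<Rightarrow> (complex \<Rightarrow> 'w::ab_group_add \<Rightarrow> 'w) \<Rightarrow> ('v \<Rightarrow> 'w \<Rightarrow> int \<Rightarrow> 'w) \<Rightarrow> bool" where
  "phi_quasi_module \<phi> Y one scV scW YW \<longleftrightarrow>
     Vector_Spaces.vector_space scW \<and>
     (\<forall>w n. Vector_Spaces.linear scV scW (\<lambda>u. YW u w n)) \<and>
     (\<forall>u n. Vector_Spaces.linear scW scW (\<lambda>w. YW u w n)) \<and>
     (\<forall>u w. lower_trunc (YW u w)) \<and>
     (\<forall>w n. YW one w n = (if n = 0 then w else 0)) \<and>
     (\<forall>u v. \<exists>p::nat \<Rightarrow> nat \<Rightarrow> complex.
        (\<exists>k j. q_subst \<phi> p k j \<noteq> 0) \<and>
        (\<forall>w. lower_trunc2 (qYY scW p YW u v w)) \<and>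
        assoc_identity scW \<phi> p Y YW u v)"

end

theory Submission
  imports Defs "HOL-Library.Groups_Big_Fun"
begin
unbundle fps_syntax


lemma SA_pair:
  fixes g :: "'a \<Rightarrow> 'b \<Rightarrow> 'c::comm_monoid_add"
  assumes "finite {(a,b). g a b \<noteq> 0}"
  shows "Sum_any (\<lambda>a. Sum_any (g a)) = Sum_any (\<lambda>(a,b). g a b)"
proof -
  let ?S = "{(a,b). g a b \<noteq> 0}"
  have "{a. \<exists>b. g a b \<noteq> 0} \<times> {b. \<exists>a. g a b \<noteq> 0} \<subseteq> fst ` ?S \<times> snd ` ?S"
  proof clarify
    fix a b a' b' assume "g a b' \<noteq> 0" "g a' b \<noteq> 0"
    then have "(a,b') \<in> ?S" "(a',b) \<in> ?S" by auto
    then show "a \<in> fst ` ?S \<and> b \<in> snd ` ?S" by (metis fst_conv snd_conv image_eqI)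
  qed
  moreover have "finite (fst ` ?S \<times> snd ` ?S)" using assms by auto
  ultimately show ?thesis by (intro Sum_any.cartesian_product) auto
qed

lemma SA_bij:
  fixes g :: "'a \<Rightarrow> 'c::comm_monoid_add"
  assumes "bij l"
  shows "Sum_any (\<lambda>x. g (l x)) = Sum_any g"
  using Sum_any.reindex_cong[OF assms, of g "\<lambda>x. g (l x)"] by (simp add: comp_def)

lemma SA_inj:
  fixes g :: "'a \<Rightarrow> 'c::comm_monoid_add"
  assumes "inj l" and "\<And>x. x \<notin> range l \<Longrightarrow> g x = 0"
  shows "Sum_any (\<lambda>x. g (l x)) = Sum_any g"
proof -
  have eq: "{x. g x \<noteq> 0} = l ` {a. g (l a) \<noteq> 0}"
  proof
    show "{x. g x \<noteq> 0} \<subseteq> l ` {a. g (l a) \<noteq> 0}"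
    proof
      fix x assume "x \<in> {x. g x \<noteq> 0}"
      then have "g x \<noteq> 0" by simp
      then have "x \<in> range l" using assms(2) by blast
      then obtain a where "x = l a" by blast
      then show "x \<in> l ` {a. g (l a) \<noteq> 0}" using \<open>g x \<noteq> 0\<close> by blast
    qed
  qed auto
  show ?thesis
  proof (cases "finite {a. g (l a) \<noteq> 0}")
    case True
    then have "finite {x. g x \<noteq> 0}" using eq by simp
    then show ?thesis using True
      by (simp add: Sum_any.expand_set eq sum.reindex inj_on_subset[OF assms(1)])
  next
    case False
    then have "\<not> finite {x. g x \<noteq> 0}" using eq finite_image_iff[OF inj_on_subset[OF assms(1)]] by auto
    then show ?thesis using False by simp
  qed
qed

lemma SA_zero:
  assumes "\<And>x. g x = 0"
  shows "Sum_any g = 0"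
proof -
  have "g = (\<lambda>x. 0)" using assms by auto
  then show ?thesis by simp
qed

lemma SA_fin_sub:
  assumes "finite A" "\<And>x. g x \<noteq> 0 \<Longrightarrow> x \<in> A"
  shows "finite {x. g x \<noteq> 0}"
proof -
  have "{x. g x \<noteq> 0} \<subseteq> A" using assms(2) by blast
  then show ?thesis using assms(1) by (rule finite_subset)
qed

lemma vs_complex: "Vector_Spaces.vector_space ((*) :: complex \<Rightarrow> complex \<Rightarrow> complex)"
  by unfold_locales (auto simp: algebra_simps)

context vector_space
begin

lemma SA_scale_right:
  assumes "finite {x. f x \<noteq> 0}"
  shows "scale c (Sum_any f) = Sum_any (\<lambda>x. scale c (f x))"
proof -
  have "Sum_any (\<lambda>x. scale c (f x)) = sum (\<lambda>x. scale c (f x)) {x. f x \<noteq> 0}"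
    by (rule Sum_any.expand_superset) (use assms in auto)
  then show ?thesis by (simp add: Sum_any.expand_set scale_sum_right)
qed

lemma SA_scale_left:
  assumes "finite {x. f x \<noteq> 0}"
  shows "scale (Sum_any f) v = Sum_any (\<lambda>x. scale (f x) v)"
proof -
  have "Sum_any (\<lambda>x. scale (f x) v) = sum (\<lambda>x. scale (f x) v) {x. f x \<noteq> 0}"
    by (rule Sum_any.expand_superset) (use assms in auto)
  then show ?thesis by (simp add: Sum_any.expand_set scale_sum_left)
qed

lemma SA_scale_inner:
  assumes "\<And>x. a x \<noteq> 0 \<Longrightarrow> finite {y. f x y \<noteq> 0}"
    and "finite {(x,y). a x \<noteq> 0 \<and> f x y \<noteq> 0}"
  shows "Sum_any (\<lambda>x. scale (a x) (Sum_any (f x))) = Sum_any (\<lambda>(x,y). scale (a x) (f x y))"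
proof -
  have "Sum_any (\<lambda>x. scale (a x) (Sum_any (f x))) = Sum_any (\<lambda>x. Sum_any (\<lambda>y. scale (a x) (f x y)))"
  proof (rule Sum_any.cong)
    fix x show "scale (a x) (Sum_any (f x)) = Sum_any (\<lambda>y. scale (a x) (f x y))"
      by (cases "a x = 0") (simp_all add: SA_scale_right assms(1))
  qed
  also have "\<dots> = Sum_any (\<lambda>(x,y). scale (a x) (f x y))"
    by (rule SA_pair) (rule finite_subset[OF _ assms(2)], auto)
  finally show ?thesis .
qed

lemma SA_scale_inner_left:
  assumes "\<And>x. v x \<noteq> 0 \<Longrightarrow> finite {y. b x y \<noteq> 0}"
    and "finite {(x,y). b x y \<noteq> 0 \<and> v x \<noteq> 0}"
  shows "Sum_any (\<lambda>x. scale (Sum_any (b x)) (v x)) = Sum_any (\<lambda>(x,y). scale (b x y) (v x))"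
proof -
  have "Sum_any (\<lambda>x. scale (Sum_any (b x)) (v x)) = Sum_any (\<lambda>x. Sum_any (\<lambda>y. scale (b x y) (v x)))"
  proof (rule Sum_any.cong)
    fix x show "scale (Sum_any (b x)) (v x) = Sum_any (\<lambda>y. scale (b x y) (v x))"
      by (cases "v x = 0") (simp_all add: SA_scale_left assms(1))
  qed
  also have "\<dots> = Sum_any (\<lambda>(x,y). scale (b x y) (v x))"
    by (rule SA_pair) (rule finite_subset[OF _ assms(2)], auto)
  finally show ?thesis .
qed

end





lemma pp_add1:
  fixes \<phi> :: "complex fls fps"
  assumes "\<phi> $ 0 \<noteq> 0"
  shows "phi_pow \<phi> (n + 1) = phi_pow \<phi> n * \<phi>"
proof (cases "0 \<le> n")
  case True
  then have "nat (n+1) = Suc (nat n)" by simp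
  then show ?thesis using True by (simp add: phi_pow_def mult.commute)
next
  case False
  have inv: "inverse \<phi> * \<phi> = 1" using assms by (rule inverse_mult_eq_1)
  obtain k where k: "nat (-n) = Suc k" using False by (cases "nat (-n)") auto
  show ?thesis
  proof (cases "n + 1 < 0")
    case True
    then have "nat (- (n+1)) = k" using k by simp
    then show ?thesis using False True k inv by (simp add: phi_pow_def mult.assoc)
  next
    case False2: False
    then have "n = -1" using False by simp
    then show ?thesis using inv by (simp add: phi_pow_def)
  qed
qed

lemma pp_add:
  fixes \<phi> :: "complex fls fps"
  assumes "\<phi> $ 0 \<noteq> 0"
  shows "phi_pow \<phi> (m + int i) = phi_pow \<phi> m * \<phi> ^ i"
proof (induction i)
  case 0 then show ?case by simp
next
  case (Suc i)
  have e: "m + int (Suc i) = (m + int i) + 1" by simp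
  have "phi_pow \<phi> (m + int (Suc i)) = phi_pow \<phi> ((m + int i) + 1)" unfolding e ..
  also have "\<dots> = phi_pow \<phi> (m + int i) * \<phi>" by (rule pp_add1[OF assms])
  finally show ?case using Suc by (simp add: mult.assoc mult.commute mult.left_commute)
qed

lemma fls_conv:
  fixes f g :: "complex fls"
  shows "(f * g) $$ t = Sum_any (\<lambda>s. f $$ s * g $$ (t - s))"
proof -
  have "Sum_any (\<lambda>s. f $$ s * g $$ (t - s)) = (\<Sum>s=fls_subdegree f..t - fls_subdegree g. f $$ s * g $$ (t - s))"
  proof (rule Sum_any.expand_superset)
    show "{s. f $$ s * g $$ (t - s) \<noteq> 0} \<subseteq> {fls_subdegree f..t - fls_subdegree g}"
    proof
      fix s assume "s \<in> {s. f $$ s * g $$ (t - s) \<noteq> 0}"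
      then have "f $$ s \<noteq> 0" "g $$ (t - s) \<noteq> 0" by auto
      then have "\<not> s < fls_subdegree f" "\<not> t - s < fls_subdegree g" using fls_eq0_below_subdegree by metis+
      then show "s \<in> {fls_subdegree f..t - fls_subdegree g}" by simp
    qed
  qed simp
  then show ?thesis by (simp add: fls_times_nth(2))
qed

lemma fls_low_mult:
  fixes f g :: "complex fls"
  assumes "\<And>j. j < \<alpha> \<Longrightarrow> f $$ j = 0" "\<And>j. j < \<beta> \<Longrightarrow> g $$ j = 0" "j < \<alpha> + \<beta>"
  shows "(f * g) $$ j = 0"
proof -
  have "(\<lambda>s. f $$ s * g $$ (j - s)) = (\<lambda>s. 0)"
  proof
    fix s show "f $$ s * g $$ (j - s) = 0"
      using assms by (cases "s < \<alpha>") auto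
  qed
  then show ?thesis by (simp only: fls_conv Sum_any.neutral)
qed

lemma fps_fls_low_mult:
  fixes A B :: "complex fls fps"
  assumes "\<And>r j. r \<le> k \<Longrightarrow> j < \<alpha> r \<Longrightarrow> A $ r $$ j = 0"
    "\<And>r j. r \<le> k \<Longrightarrow> j < \<beta> r \<Longrightarrow> B $ (k - r) $$ j = 0"
    "\<And>r. r \<le> k \<Longrightarrow> j < \<alpha> r + \<beta> r"
  shows "(A * B) $ k $$ j = 0"
  unfolding fps_mult_nth fls_nth_sum
proof (rule sum.neutral, rule ballI)
  fix r assume "r \<in> {0..k}"
  then have r: "r \<le> k" by simp
  show "(A $ r * B $ (k - r)) $$ j = 0"
    by (rule fls_low_mult[of "\<alpha> r" _ "\<beta> r"]) (use assms r in auto)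
qed

lemma unif_low:
  fixes f :: "nat \<Rightarrow> complex fls"
  shows "\<exists>L. \<forall>r\<le>K. \<forall>j<L. f r $$ j = 0"
proof -
  define L where "L = Min ((\<lambda>r. fls_subdegree (f r)) ` {..K})"
  have "\<forall>r\<le>K. L \<le> fls_subdegree (f r)" unfolding L_def by (auto intro: Min_le)
  then show ?thesis by (intro exI[of _ L]) (auto)
qed

lemma phi_B1:
  fixes \<phi> :: "complex fls fps"
  assumes "\<phi> $ 0 = fls_X"
  shows "\<exists>D\<ge>0. \<forall>i k j. k \<le> K \<longrightarrow> j < int i - int k * D \<longrightarrow> (\<phi> ^ i) $ k $$ j = 0"
proof -
  obtain L where L: "\<forall>r\<le>K. \<forall>j<L. \<phi> $ r $$ j = 0" using unif_low by blast
  define D where "D = max 0 (1 - L)"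
  have D0: "D \<ge> 0" unfolding D_def by simp
  have "\<forall>k j. k \<le> K \<longrightarrow> j < int i - int k * D \<longrightarrow> (\<phi> ^ i) $ k $$ j = 0" for i
  proof (induction i)
    case 0
    then show ?case using D0 by (auto simp: mult_nonneg_nonneg)
  next
    case (Suc i)
    show ?case
    proof (intro allI impI)
      fix k j assume k: "k \<le> K" and j: "j < int (Suc i) - int k * D"
      have "(\<phi> * \<phi> ^ i) $ k $$ j = 0"
      proof (rule fps_fls_low_mult[where \<alpha>="\<lambda>r. if r = 0 then 1 else 1 - D" and \<beta>="\<lambda>r. int i - int (k - r) * D"])
        fix r j' assume r: "r \<le> k" and j': "j' < (if r = 0 then 1 else 1 - D)"
        show "\<phi> $ r $$ j' = 0"
        proof (cases "r = 0")
          case True then show ?thesis using assms j' by simp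
        next
          case False then show ?thesis using L r k j' D_def by auto
        qed
      next
        fix r j' assume r: "r \<le> k" and j': "j' < int i - int (k - r) * D"
        then show "(\<phi> ^ i) $ (k - r) $$ j' = 0" using Suc k by auto
      next
        fix r assume r: "r \<le> k"
        show "j < (if r = 0 then 1 else 1 - D) + (int i - int (k - r) * D)"
        proof (cases "r = 0")
          case True then show ?thesis using j by simp
        next
          case False
          have "int (k - r) * D \<le> (int k - 1) * D" using False r D0 by (intro mult_right_mono) auto
          then show ?thesis using False j by (simp add: algebra_simps)
        qed
      qed
      then show "(\<phi> ^ Suc i) $ k $$ j = 0" by simp
    qed
  qed
  then show ?thesis using D0 by blast
qed

lemma phi_B2:
  fixes \<phi> :: "complex fls fps"
  assumes "\<phi> $ 0 = fls_X"
  shows "\<exists>E. \<forall>k m j. k \<le> K \<longrightarrow> N \<le> m \<longrightarrow> j < m - E \<longrightarrow> phi_coeff \<phi> k m j = 0"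
proof -
  obtain D where D0: "D \<ge> 0" and D: "\<forall>i k j. k \<le> K \<longrightarrow> j < int i - int k * D \<longrightarrow> (\<phi> ^ i) $ k $$ j = 0"
    using phi_B1[OF assms] by blast
  obtain L where L: "\<forall>r\<le>K. \<forall>j<L. phi_pow \<phi> N $ r $$ j = 0" using unif_low by blast
  have ne: "\<phi> $ 0 \<noteq> 0" using assms by simp
  define E where "E = N - L + int K * D"
  have "phi_coeff \<phi> k m j = 0" if k: "k \<le> K" and m: "N \<le> m" and j: "j < m - E" for k m j
  proof -
    define i where "i = nat (m - N)"
    have mi: "m = N + int i" using m i_def by simp
    have "(phi_pow \<phi> N * \<phi> ^ i) $ k $$ j = 0"
    proof (rule fps_fls_low_mult[where \<alpha>="\<lambda>r. L" and \<beta>="\<lambda>r. int i - int (k - r) * D"])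
      fix r j' assume "r \<le> k" "j' < L" then show "phi_pow \<phi> N $ r $$ j' = 0" using L k by auto
    next
      fix r j' assume "r \<le> k" "j' < int i - int (k - r) * D"
      then show "(\<phi> ^ i) $ (k - r) $$ j' = 0" using D k by auto
    next
      fix r assume r: "r \<le> k"
      have "int (k - r) * D \<le> int K * D" using r k D0 by (intro mult_right_mono) auto
      then show "j < L + (int i - int (k - r) * D)" using j mi E_def by simp
    qed
    then show ?thesis unfolding phi_coeff_def mi pp_add[OF ne] .
  qed
  then show ?thesis by blast
qed





lemma sum_nat_SA_int:
  fixes h :: "nat \<Rightarrow> 'a::comm_monoid_add"
  shows "(\<Sum>r=0..k. h r) = Sum_any (\<lambda>k1::int. if 0 \<le> k1 \<and> k1 \<le> int k then h (nat k1) else 0)"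
proof -
  have "Sum_any (\<lambda>k1::int. if 0 \<le> k1 \<and> k1 \<le> int k then h (nat k1) else 0)
      = Sum_any (\<lambda>r::nat. (\<lambda>k1::int. if 0 \<le> k1 \<and> k1 \<le> int k then h (nat k1) else 0) (int r))"
    by (rule SA_inj[symmetric]) (auto simp: inj_def image_iff, metis nat_0_le)
  also have "\<dots> = Sum_any (\<lambda>r::nat. if r \<in> {0..k} then h r else 0)" by (rule Sum_any.cong) auto
  also have "\<dots> = (\<Sum>r=0..k. h r)" by (rule Sum_any.conditionalize[symmetric]) simp
  finally show ?thesis by simp
qed

lemma phi_prod:
  fixes \<phi> :: "complex fls fps"
  assumes "\<phi> $ 0 \<noteq> 0"
  shows "phi_coeff \<phi> k (m + int i) t = Sum_any (\<lambda>(k1::int, s::int). if 0 \<le> k1 \<and> k1 \<le> int k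
      then phi_coeff \<phi> (nat k1) (int i) s * phi_coeff \<phi> (k - nat k1) m (t - s) else 0)"
proof -
  have pi: "phi_pow \<phi> (int i) = \<phi> ^ i" by (simp add: phi_pow_def)
  obtain L1 where L1: "\<forall>r\<le>k. \<forall>j<L1. (\<phi> ^ i) $ r $$ j = 0" using unif_low by blast
  obtain L2 where L2: "\<forall>r\<le>k. \<forall>j<L2. phi_pow \<phi> m $ r $$ j = 0" using unif_low by blast
  have "phi_coeff \<phi> k (m + int i) t = (\<phi> ^ i * phi_pow \<phi> m) $ k $$ t"
    by (simp add: phi_coeff_def pp_add[OF assms] mult.commute)
  also have "\<dots> = (\<Sum>r=0..k. Sum_any (\<lambda>s. (\<phi> ^ i) $ r $$ s * phi_pow \<phi> m $ (k - r) $$ (t - s)))"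
    by (simp add: fps_mult_nth fls_nth_sum fls_conv)
  also have "\<dots> = Sum_any (\<lambda>k1::int. if 0 \<le> k1 \<and> k1 \<le> int k then
      Sum_any (\<lambda>s. (\<phi> ^ i) $ (nat k1) $$ s * phi_pow \<phi> m $ (k - nat k1) $$ (t - s)) else 0)"
    by (rule sum_nat_SA_int)
  also have "\<dots> = Sum_any (\<lambda>k1::int. Sum_any (\<lambda>s. if 0 \<le> k1 \<and> k1 \<le> int k then
      (\<phi> ^ i) $ (nat k1) $$ s * phi_pow \<phi> m $ (k - nat k1) $$ (t - s) else 0))"
    by (rule Sum_any.cong) auto
  also have "\<dots> = Sum_any (\<lambda>(k1::int, s::int). if 0 \<le> k1 \<and> k1 \<le> int k then
      (\<phi> ^ i) $ (nat k1) $$ s * phi_pow \<phi> m $ (k - nat k1) $$ (t - s) else 0)"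
  proof (rule SA_pair, rule finite_subset[of _ "{0..int k} \<times> {L1..t-L2}"])
    show "{(a, b). (if 0 \<le> a \<and> a \<le> int k then (\<phi> ^ i) $ nat a $$ b * phi_pow \<phi> m $ (k - nat a) $$ (t - b) else 0) \<noteq> 0}
        \<subseteq> {0..int k} \<times> {L1..t - L2}"
    proof (clarsimp)
      fix a b assume a: "0 \<le> a" "a \<le> int k" and nz: "(\<phi> ^ i) $ nat a $$ b \<noteq> 0" "phi_pow \<phi> m $ (k - nat a) $$ (t - b) \<noteq> 0"
      have "\<not> b < L1" using L1 nz(1) a by (metis nat_le_iff)
      moreover have "\<not> t - b < L2" using L2 nz(2) by (meson diff_le_self)
      ultimately show "L1 \<le> b \<and> b \<le> t - L2" by simp
    qed
  qed simp
  finally show ?thesis unfolding phi_coeff_def pi .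
qed




definition lex_trunc :: "(int \<Rightarrow> int \<Rightarrow> 'a::zero) \<Rightarrow> bool" where
  "lex_trunc f \<longleftrightarrow> (\<exists>N. \<forall>a b. a < N \<longrightarrow> f a b = 0) \<and> (\<forall>a. \<exists>M. \<forall>b. b < M \<longrightarrow> f a b = 0)"

definition conv :: "(complex \<Rightarrow> 'w \<Rightarrow> 'w) \<Rightarrow> (int \<Rightarrow> int \<Rightarrow> complex) \<Rightarrow> (int \<Rightarrow> int \<Rightarrow> 'w::ab_group_add) \<Rightarrow> int \<Rightarrow> int \<Rightarrow> 'w" where
  "conv sc c f a b = Sum_any (\<lambda>(k,p). sc (c k p) (f (a-k) (b-p)))"

lemma lex_N: "lex_trunc f \<Longrightarrow> \<exists>N. \<forall>a b. a < N \<longrightarrow> f a b = 0"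
  unfolding lex_trunc_def by blast

lemma lex_unif:
  assumes "lex_trunc f"
  shows "\<exists>M. \<forall>a b. lo \<le> a \<longrightarrow> a \<le> hi \<longrightarrow> b < M \<longrightarrow> f a b = 0"
proof -
  obtain Mf where Mf: "\<forall>a b. b < Mf a \<longrightarrow> f a b = 0" using assms unfolding lex_trunc_def by metis
  define M where "M = Min (insert 0 (Mf ` {lo..hi}))"
  have "\<forall>a. lo \<le> a \<longrightarrow> a \<le> hi \<longrightarrow> M \<le> Mf a"
  proof (intro allI impI)
    fix a assume "lo \<le> a" "a \<le> hi"
    then have "Mf a \<in> insert 0 (Mf ` {lo..hi})" by auto
    then show "M \<le> Mf a" unfolding M_def by (rule Min_le[rotated]) simp
  qed
  then show ?thesis using Mf by (intro exI[of _ M]) force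
qed

lemma int_min:
  fixes S :: "int set"
  assumes "S \<noteq> {}" "\<And>x. x \<in> S \<Longrightarrow> N \<le> x"
  shows "\<exists>m\<in>S. \<forall>x\<in>S. m \<le> x"
proof -
  obtain x where x: "x \<in> S" using assms by blast
  define m where "m = Min (S \<inter> {N..x})"
  have fin: "finite (S \<inter> {N..x})" by simp
  have mem: "m \<in> S \<inter> {N..x}" unfolding m_def using x assms(2) fin by (intro Min_in) auto
  have "\<forall>y\<in>S. m \<le> y"
  proof
    fix y assume y: "y \<in> S"
    show "m \<le> y"
    proof (cases "y \<le> x")
      case True then show ?thesis unfolding m_def using y assms(2) fin by (intro Min_le) auto
    next
      case False then show ?thesis using mem by auto
    qed
  qed
  then show ?thesis using mem by blast
qed

lemma min_exists:
  fixes P :: "int \<Rightarrow> bool"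
  assumes "P x0" "\<And>x. P x \<Longrightarrow> N \<le> x"
  shows "\<exists>m. P m \<and> (\<forall>x. P x \<longrightarrow> m \<le> x)"
  using int_min[of "Collect P" N] assms by blast

lemma conv_fin:
  fixes c :: "int \<Rightarrow> int \<Rightarrow> 'a::zero" and f :: "int \<Rightarrow> int \<Rightarrow> 'b::zero"
  assumes "lex_trunc c" "lex_trunc f"
  shows "finite {(k,p). c k p \<noteq> 0 \<and> f (a-k) (b-p) \<noteq> 0}"
proof -
  obtain Nc where Nc: "\<And>a b. a < Nc \<Longrightarrow> c a b = 0" using lex_N[OF assms(1)] by blast
  obtain Nf where Nf: "\<And>a b. a < Nf \<Longrightarrow> f a b = 0" using lex_N[OF assms(2)] by blast
  obtain Mc where Mc: "\<And>k p. Nc \<le> k \<Longrightarrow> k \<le> a - Nf \<Longrightarrow> p < Mc \<Longrightarrow> c k p = 0"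
    using lex_unif[OF assms(1)] by blast
  obtain Mf where Mf: "\<And>k p. Nf \<le> k \<Longrightarrow> k \<le> a - Nc \<Longrightarrow> p < Mf \<Longrightarrow> f k p = 0"
    using lex_unif[OF assms(2)] by blast
  show ?thesis
  proof (rule finite_subset[of _ "{Nc..a-Nf} \<times> {Mc..b-Mf}"])
    show "{(k, p). c k p \<noteq> 0 \<and> f (a - k) (b - p) \<noteq> 0} \<subseteq> {Nc..a - Nf} \<times> {Mc..b - Mf}"
    proof (rule subsetI)
      fix x assume "x \<in> {(k, p). c k p \<noteq> 0 \<and> f (a - k) (b - p) \<noteq> 0}"
      then obtain k p where x: "x = (k,p)" and nz: "c k p \<noteq> 0" "f (a - k) (b - p) \<noteq> 0" by auto
      have k1: "Nc \<le> k" using Nc[of k p] nz by linarith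
      have k2: "Nf \<le> a - k" using Nf[of "a-k" "b-p"] nz by linarith
      have "Mc \<le> p" using Mc[of k p] nz k1 k2 by linarith
      moreover have "Mf \<le> b - p" using Mf[of "a-k" "b-p"] nz k1 k2 by linarith
      ultimately show "x \<in> {Nc..a - Nf} \<times> {Mc..b - Mf}" using k1 k2 x by simp
    qed
  qed simp
qed

lemma conv_fin3:
  fixes c1 c2 :: "int \<Rightarrow> int \<Rightarrow> 'a::zero" and f :: "int \<Rightarrow> int \<Rightarrow> 'b::zero"
  assumes "lex_trunc c1" "lex_trunc c2" "lex_trunc f"
  shows "finite {((k1,p1),(k2,p2)). c1 k1 p1 \<noteq> 0 \<and> c2 k2 p2 \<noteq> 0 \<and> f (a-k1-k2) (b-p1-p2) \<noteq> 0}"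
proof -
  obtain N1 where N1: "\<And>a b. a < N1 \<Longrightarrow> c1 a b = 0" using lex_N[OF assms(1)] by blast
  obtain N2 where N2: "\<And>a b. a < N2 \<Longrightarrow> c2 a b = 0" using lex_N[OF assms(2)] by blast
  obtain Nf where Nf: "\<And>a b. a < Nf \<Longrightarrow> f a b = 0" using lex_N[OF assms(3)] by blast
  obtain M1 where M1: "\<And>k p. N1 \<le> k \<Longrightarrow> k \<le> a - N2 - Nf \<Longrightarrow> p < M1 \<Longrightarrow> c1 k p = 0"
    using lex_unif[OF assms(1)] by blast
  obtain M2 where M2: "\<And>k p. N2 \<le> k \<Longrightarrow> k \<le> a - N1 - Nf \<Longrightarrow> p < M2 \<Longrightarrow> c2 k p = 0"
    using lex_unif[OF assms(2)] by blast
  obtain Mf where Mf: "\<And>k p. Nf \<le> k \<Longrightarrow> k \<le> a - N1 - N2 \<Longrightarrow> p < Mf \<Longrightarrow> f k p = 0"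
    using lex_unif[OF assms(3)] by blast
  show ?thesis
  proof (rule finite_subset[of _ "({N1..a-N2-Nf} \<times> {M1..b-M2-Mf}) \<times> ({N2..a-N1-Nf} \<times> {M2..b-M1-Mf})"])
    show "{((k1,p1),(k2,p2)). c1 k1 p1 \<noteq> 0 \<and> c2 k2 p2 \<noteq> 0 \<and> f (a-k1-k2) (b-p1-p2) \<noteq> 0}
      \<subseteq> ({N1..a-N2-Nf} \<times> {M1..b-M2-Mf}) \<times> ({N2..a-N1-Nf} \<times> {M2..b-M1-Mf})"
    proof (rule subsetI)
      fix x assume "x \<in> {((k1,p1),(k2,p2)). c1 k1 p1 \<noteq> 0 \<and> c2 k2 p2 \<noteq> 0 \<and> f (a-k1-k2) (b-p1-p2) \<noteq> 0}"
      then obtain k1 p1 k2 p2 where x: "x = ((k1,p1),(k2,p2))" and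
        nz: "c1 k1 p1 \<noteq> 0" "c2 k2 p2 \<noteq> 0" "f (a-k1-k2) (b-p1-p2) \<noteq> 0" by auto
      have a1: "N1 \<le> k1" using N1[of k1 p1] nz by linarith
      have a2: "N2 \<le> k2" using N2[of k2 p2] nz by linarith
      have a3: "Nf \<le> a-k1-k2" using Nf[of "a-k1-k2" "b-p1-p2"] nz by linarith
      have b1: "M1 \<le> p1" using M1[of k1 p1] nz a1 a2 a3 by linarith
      have b2: "M2 \<le> p2" using M2[of k2 p2] nz a1 a2 a3 by linarith
      have b3: "Mf \<le> b-p1-p2" using Mf[of "a-k1-k2" "b-p1-p2"] nz a1 a2 a3 by linarith
      show "x \<in> ({N1..a-N2-Nf} \<times> {M1..b-M2-Mf}) \<times> ({N2..a-N1-Nf} \<times> {M2..b-M1-Mf})"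
        unfolding x using a1 a2 a3 b1 b2 b3 by simp
    qed
  qed simp
qed

lemma lex_trunc_diff:
  fixes f g :: "int \<Rightarrow> int \<Rightarrow> 'a::ab_group_add"
  assumes "lex_trunc f" "lex_trunc g"
  shows "lex_trunc (\<lambda>a b. f a b - g a b)"
proof -
  obtain N1 where N1: "\<forall>a b. a < N1 \<longrightarrow> f a b = 0" using lex_N[OF assms(1)] by blast
  obtain N2 where N2: "\<forall>a b. a < N2 \<longrightarrow> g a b = 0" using lex_N[OF assms(2)] by blast
  have "\<exists>M. \<forall>b. b < M \<longrightarrow> f a b - g a b = 0" for a
  proof -
    obtain M1 where "\<forall>b. b < M1 \<longrightarrow> f a b = 0" using assms(1) unfolding lex_trunc_def by blast
    moreover obtain M2 where "\<forall>b. b < M2 \<longrightarrow> g a b = 0" using assms(2) unfolding lex_trunc_def by blast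
    ultimately show ?thesis by (intro exI[of _ "min M1 M2"]) auto
  qed
  then show ?thesis unfolding lex_trunc_def using N1 N2 by (intro conjI exI[of _ "min N1 N2"]) auto
qed

lemma SA_diff:
  fixes u v :: "'a \<Rightarrow> 'b::ab_group_add"
  assumes "finite {x. u x \<noteq> 0}" "finite {x. v x \<noteq> 0}"
  shows "Sum_any (\<lambda>x. u x - v x) = Sum_any u - Sum_any v"
proof -
  let ?A = "{x. u x \<noteq> 0} \<union> {x. v x \<noteq> 0}"
  have "Sum_any (\<lambda>x. u x - v x) = sum (\<lambda>x. u x - v x) ?A"
    by (rule Sum_any.expand_superset) (use assms in auto)
  moreover have "Sum_any u = sum u ?A" by (rule Sum_any.expand_superset) (use assms in auto)
  moreover have "Sum_any v = sum v ?A" by (rule Sum_any.expand_superset) (use assms in auto)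
  ultimately show ?thesis by (simp add: sum_subtractf)
qed

locale cvs = vector_space scale for scale :: "complex \<Rightarrow> 'w::ab_group_add \<Rightarrow> 'w"
begin

lemma conv_lex:
  assumes "lex_trunc c" "lex_trunc f"
  shows "lex_trunc (conv scale c f)"
proof -
  obtain Nc where Nc: "\<And>a b. a < Nc \<Longrightarrow> c a b = 0" using lex_N[OF assms(1)] by blast
  obtain Nf where Nf: "\<And>a b. a < Nf \<Longrightarrow> f a b = 0" using lex_N[OF assms(2)] by blast
  have A: "conv scale c f a b = 0" if "a < Nc + Nf" for a b
  proof -
    have "\<And>k p. scale (c k p) (f (a-k) (b-p)) = 0"
    proof -
      fix k p show "scale (c k p) (f (a-k) (b-p)) = 0"
      proof (cases "k < Nc")
        case True then show ?thesis using Nc[of k p] by simp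
      next
        case False then show ?thesis using Nf[of "a-k" "b-p"] that by simp
      qed
    qed
    then show ?thesis unfolding conv_def by (intro SA_zero) (simp add: split_beta)
  qed
  have B: "\<exists>M. \<forall>b. b < M \<longrightarrow> conv scale c f a b = 0" for a
  proof -
    obtain Mc where Mc: "\<And>k p. Nc \<le> k \<Longrightarrow> k \<le> a - Nf \<Longrightarrow> p < Mc \<Longrightarrow> c k p = 0"
      using lex_unif[OF assms(1)] by blast
    obtain Mf where Mf: "\<And>k p. Nf \<le> k \<Longrightarrow> k \<le> a - Nc \<Longrightarrow> p < Mf \<Longrightarrow> f k p = 0"
      using lex_unif[OF assms(2)] by blast
    have "conv scale c f a b = 0" if b: "b < Mc + Mf" for b
    proof -
      have "\<And>k p. scale (c k p) (f (a-k) (b-p)) = 0"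
      proof -
        fix k p
        show "scale (c k p) (f (a-k) (b-p)) = 0"
        proof (cases "Nc \<le> k \<and> k \<le> a - Nf")
          case True
          show ?thesis
          proof (cases "p < Mc")
            case True2: True then show ?thesis using Mc[of k p] True by simp
          next
            case False then show ?thesis using Mf[of "a-k" "b-p"] True b by simp
          qed
        next
          case False
          show ?thesis
          proof (cases "k < Nc")
            case True then show ?thesis using Nc[of k p] by simp
          next
            case False2: False then show ?thesis using Nf[of "a-k" "b-p"] False by simp
          qed
        qed
      qed
      then show ?thesis unfolding conv_def by (intro SA_zero) (simp add: split_beta)
    qed
    then show ?thesis by blast
  qed
  show ?thesis unfolding lex_trunc_def using A B by blast
qed

lemma conv_expand2:
  assumes "lex_trunc c1" "lex_trunc c2" "lex_trunc f"
  shows "conv scale c1 (conv scale c2 f) a b =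
    Sum_any (\<lambda>(x,y). scale (c1 (fst x) (snd x) * c2 (fst y) (snd y)) (f (a - fst x - fst y) (b - snd x - snd y)))"
proof -
  have "conv scale c1 (conv scale c2 f) a b =
      Sum_any (\<lambda>x. scale (c1 (fst x) (snd x)) (Sum_any (\<lambda>y. scale (c2 (fst y) (snd y)) (f (a - fst x - fst y) (b - snd x - snd y)))))"
    unfolding conv_def by (simp add: case_prod_beta diff_diff_eq)
  also have "\<dots> = Sum_any (\<lambda>(x,y). scale (c1 (fst x) (snd x)) (scale (c2 (fst y) (snd y)) (f (a - fst x - fst y) (b - snd x - snd y))))"
  proof (rule SA_scale_inner)
    fix x
    show "finite {y. scale (c2 (fst y) (snd y)) (f (a - fst x - fst y) (b - snd x - snd y)) \<noteq> 0}"
      by (rule finite_subset[OF _ conv_fin[OF assms(2,3), of "a - fst x" "b - snd x"]]) (auto simp: diff_diff_eq)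
  next
    show "finite {(x, y). c1 (fst x) (snd x) \<noteq> 0 \<and> scale (c2 (fst y) (snd y)) (f (a - fst x - fst y) (b - snd x - snd y)) \<noteq> 0}"
      by (rule finite_subset[OF _ conv_fin3[OF assms, of a b]]) auto
  qed
  finally show ?thesis by simp
qed

lemma conv_comm:
  assumes "lex_trunc c1" "lex_trunc c2" "lex_trunc f"
  shows "conv scale c1 (conv scale c2 f) = conv scale c2 (conv scale c1 f)"
proof (intro ext)
  fix a b
  have bij: "bij (\<lambda>(x::int\<times>int, y::int\<times>int). (y, x))" by (auto intro!: bijI injI simp: image_def)
  have "conv scale c2 (conv scale c1 f) a b =
    Sum_any (\<lambda>(x,y). scale (c2 (fst x) (snd x) * c1 (fst y) (snd y)) (f (a - fst x - fst y) (b - snd x - snd y)))"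
    by (rule conv_expand2[OF assms(2,1,3)])
  also have "\<dots> = Sum_any (\<lambda>z. (\<lambda>(x,y). scale (c2 (fst x) (snd x) * c1 (fst y) (snd y)) (f (a - fst x - fst y) (b - snd x - snd y))) ((\<lambda>(x,y). (y,x)) z))"
    by (rule SA_bij[symmetric, OF bij])
  also have "\<dots> = Sum_any (\<lambda>(x,y). scale (c1 (fst x) (snd x) * c2 (fst y) (snd y)) (f (a - fst x - fst y) (b - snd x - snd y)))"
    by (rule Sum_any.cong) (auto simp: mult.commute algebra_simps)
  also have "\<dots> = conv scale c1 (conv scale c2 f) a b" by (rule conv_expand2[OF assms, symmetric])
  finally show "conv scale c1 (conv scale c2 f) a b = conv scale c2 (conv scale c1 f) a b" by simp
qed

lemma conv_diff:
  assumes "lex_trunc c" "lex_trunc f" "lex_trunc g"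
  shows "conv scale c f a b - conv scale c g a b = conv scale c (\<lambda>a b. f a b - g a b) a b"
proof -
  have "conv scale c (\<lambda>a b. f a b - g a b) a b = Sum_any (\<lambda>x. scale (c (fst x) (snd x)) (f (a - fst x) (b - snd x)) - scale (c (fst x) (snd x)) (g (a - fst x) (b - snd x)))"
    unfolding conv_def by (simp add: case_prod_beta scale_right_diff_distrib)
  also have "\<dots> = Sum_any (\<lambda>x. scale (c (fst x) (snd x)) (f (a - fst x) (b - snd x))) - Sum_any (\<lambda>x. scale (c (fst x) (snd x)) (g (a - fst x) (b - snd x)))"
    by (rule SA_diff, rule finite_subset[OF _ conv_fin[OF assms(1,2), of a b]], force,
        rule finite_subset[OF _ conv_fin[OF assms(1,3), of a b]], force)
  finally show ?thesis unfolding conv_def by (simp add: case_prod_beta)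
qed

lemma conv_cancel0:
  assumes c: "lex_trunc c" and cnz: "c k' p' \<noteq> 0" and h: "lex_trunc h"
    and z: "\<And>a b. conv scale c h a b = 0"
  shows "h a b = 0"
proof (rule ccontr)
  assume hnz: "h a b \<noteq> 0"
  obtain Nc where Nc: "\<And>a b. a < Nc \<Longrightarrow> c a b = 0" using lex_N[OF c] by blast
  obtain Nh where Nh: "\<And>a b. a < Nh \<Longrightarrow> h a b = 0" using lex_N[OF h] by blast
  obtain k0 where k0: "\<exists>p. c k0 p \<noteq> 0" "\<And>x. \<exists>p. c x p \<noteq> 0 \<Longrightarrow> k0 \<le> x"
  proof -
    have "\<exists>m. (\<exists>p. c m p \<noteq> 0) \<and> (\<forall>x. (\<exists>p. c x p \<noteq> 0) \<longrightarrow> m \<le> x)"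
    proof (rule min_exists[of _ k' Nc])
      show "\<exists>p. c k' p \<noteq> 0" using cnz by blast
      fix x assume "\<exists>p. c x p \<noteq> 0"
      then obtain p where "c x p \<noteq> 0" by blast
      then show "Nc \<le> x" using Nc[of x p] by linarith
    qed
    then show ?thesis using that by blast
  qed
  obtain Mc where Mc: "\<And>b. b < Mc \<Longrightarrow> c k0 b = 0" using c unfolding lex_trunc_def by blast
  obtain p0 where p0: "c k0 p0 \<noteq> 0" "\<And>x. c k0 x \<noteq> 0 \<Longrightarrow> p0 \<le> x"
  proof -
    obtain p1 where p1: "c k0 p1 \<noteq> 0" using k0(1) by blast
    have "\<exists>m. c k0 m \<noteq> 0 \<and> (\<forall>x. c k0 x \<noteq> 0 \<longrightarrow> m \<le> x)"
    proof (rule min_exists[of _ p1 Mc])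
      show "c k0 p1 \<noteq> 0" by (rule p1)
      fix x assume "c k0 x \<noteq> 0" then show "Mc \<le> x" using Mc[of x] by linarith
    qed
    then show ?thesis using that by blast
  qed
  obtain a0 where a0: "\<exists>b. h a0 b \<noteq> 0" "\<And>x. \<exists>b. h x b \<noteq> 0 \<Longrightarrow> a0 \<le> x"
  proof -
    have "\<exists>m. (\<exists>b. h m b \<noteq> 0) \<and> (\<forall>x. (\<exists>b. h x b \<noteq> 0) \<longrightarrow> m \<le> x)"
    proof (rule min_exists[of _ a Nh])
      show "\<exists>b'. h a b' \<noteq> 0" using hnz by blast
      fix x assume "\<exists>b. h x b \<noteq> 0"
      then obtain b where "h x b \<noteq> 0" by blast
      then show "Nh \<le> x" using Nh[of x b] by linarith
    qed
    then show ?thesis using that by blast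
  qed
  obtain Mh where Mh: "\<And>b. b < Mh \<Longrightarrow> h a0 b = 0" using h unfolding lex_trunc_def by blast
  obtain b0 where b0: "h a0 b0 \<noteq> 0" "\<And>x. h a0 x \<noteq> 0 \<Longrightarrow> b0 \<le> x"
  proof -
    obtain b1 where b1: "h a0 b1 \<noteq> 0" using a0(1) by blast
    have "\<exists>m. h a0 m \<noteq> 0 \<and> (\<forall>x. h a0 x \<noteq> 0 \<longrightarrow> m \<le> x)"
    proof (rule min_exists[of _ b1 Mh])
      show "h a0 b1 \<noteq> 0" by (rule b1)
      fix x assume "h a0 x \<noteq> 0" then show "Mh \<le> x" using Mh[of x] by linarith
    qed
    then show ?thesis using that by blast
  qed
  have "conv scale c h (k0 + a0) (p0 + b0) = sum (\<lambda>(k,p). scale (c k p) (h (k0 + a0 - k) (p0 + b0 - p))) {(k0,p0)}"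
    unfolding conv_def
  proof (rule Sum_any.expand_superset)
    show "{x. (case x of (k, p) \<Rightarrow> scale (c k p) (h (k0 + a0 - k) (p0 + b0 - p))) \<noteq> 0} \<subseteq> {(k0, p0)}"
    proof (rule subsetI)
      fix x assume "x \<in> {x. (case x of (k, p) \<Rightarrow> scale (c k p) (h (k0 + a0 - k) (p0 + b0 - p))) \<noteq> 0}"
      then obtain k p where x: "x = (k,p)" and nz: "c k p \<noteq> 0" "h (k0 + a0 - k) (p0 + b0 - p) \<noteq> 0" by (cases x) auto
      have "k0 \<le> k" using k0(2)[of k] nz by blast
      moreover have "a0 \<le> k0 + a0 - k" using a0(2)[of "k0 + a0 - k"] nz by blast
      ultimately have kk: "k = k0" by linarith
      have "p0 \<le> p" using p0(2)[of p] nz kk by blast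
      moreover have "b0 \<le> p0 + b0 - p" using b0(2)[of "p0 + b0 - p"] nz kk by simp
      ultimately show "x \<in> {(k0, p0)}" using x kk by simp
    qed
  qed simp
  also have "\<dots> = scale (c k0 p0) (h a0 b0)" by simp
  finally have "scale (c k0 p0) (h a0 b0) = 0" using z by simp
  then show False using p0(1) b0(1) by simp
qed

lemma conv_cancel:
  assumes c: "lex_trunc c" and cnz: "c k' p' \<noteq> 0" and f: "lex_trunc f" and g: "lex_trunc g"
    and eq: "conv scale c f = conv scale c g"
  shows "f = g"
proof (intro ext)
  fix a b
  have "(\<lambda>a b. f a b - g a b) a b = 0"
  proof (rule conv_cancel0[OF c cnz lex_trunc_diff[OF f g]])
    fix a b show "conv scale c (\<lambda>a b. f a b - g a b) a b = 0"
      using conv_diff[OF c f g, of a b] eq by simp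
  qed
  then show "f a b = g a b" by simp
qed

end




definition ext2 :: "(nat \<Rightarrow> int \<Rightarrow> 'a::zero) \<Rightarrow> int \<Rightarrow> int \<Rightarrow> 'a" where
  "ext2 f a b = (if a < 0 then 0 else f (nat a) b)"

definition pconv :: "(complex \<Rightarrow> 'w \<Rightarrow> 'w) \<Rightarrow> (nat \<Rightarrow> nat \<Rightarrow> complex) \<Rightarrow> (int \<Rightarrow> int \<Rightarrow> 'w::ab_group_add) \<Rightarrow> int \<Rightarrow> int \<Rightarrow> 'w" where
  "pconv sc c F m n = Sum_any (\<lambda>(i::nat, j::nat). sc (c i j) (F (m - int i) (n - int j)))"

lemma qYY_pconv: "qYY scW q YW u v w = pconv scW q (\<lambda>m n. YW u (YW v w n) m)"
  unfolding qYY_def pconv_def by (intro ext) simp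

lemma box_nat: "int i \<le> U \<Longrightarrow> i \<in> {..nat U}"
  by simp

context cvs
begin

lemma qYW_Y_conv:
  "qYW_Y scale \<phi> q Y YW u v w a b = conv scale (ext2 (q_subst \<phi> q)) (\<lambda>a b. YW (Y u v a) w b) a b"
proof -
  let ?g = "\<lambda>(k::int,p::int). scale (ext2 (q_subst \<phi> q) k p) (YW (Y u v (a - k)) w (b - p))"
  let ?l = "\<lambda>(k::nat,p::int). (int k, p)"
  have "Sum_any (\<lambda>x. ?g (?l x)) = Sum_any ?g"
  proof (rule SA_inj)
    show "inj ?l" by (auto simp: inj_def)
  next
    fix x assume xr: "x \<notin> range ?l"
    obtain k p where x: "x = (k,p)" by (cases x)
    have "k < 0"
    proof (rule ccontr)
      assume "\<not> k < 0"
      then have "x = ?l (nat k, p)" using x by simp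
      then show False using xr by blast
    qed
    then show "?g x = 0" using x by (simp add: ext2_def)
  qed
  moreover have "Sum_any (\<lambda>x. ?g (?l x)) = qYW_Y scale \<phi> q Y YW u v w a b"
    unfolding qYW_Y_def by (rule Sum_any.cong) (auto simp: ext2_def)
  ultimately show ?thesis unfolding conv_def by simp
qed

lemma pconv_expand2:
  assumes YY: "lex_trunc (\<lambda>n m. YY m n)"
  shows "pconv scale c1 (pconv scale c2 YY) m n =
    Sum_any (\<lambda>(x,y). scale (c1 (fst x) (snd x) * c2 (fst y) (snd y)) (YY (m - int (fst x) - int (fst y)) (n - int (snd x) - int (snd y))))"
proof -
  obtain N where N: "\<And>a b. a < N \<Longrightarrow> YY b a = 0" using lex_N[OF YY] by blast
  obtain M where M: "\<And>a b. N \<le> a \<Longrightarrow> a \<le> n \<Longrightarrow> b < M \<Longrightarrow> YY b a = 0" using lex_unif[OF YY, of N n] by blast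
  have key: "int i \<le> m - M \<and> int j \<le> n - N" if "YY (m - int i - int i') (n - int j - int j') \<noteq> 0" for i j i' j'
  proof -
    have "N \<le> n - int j - int j'" using N[of "n - int j - int j'" "m - int i - int i'"] that by linarith
    moreover have "M \<le> m - int i - int i'" using M[of "n - int j - int j'" "m - int i - int i'"] that calculation by linarith
    ultimately show ?thesis by linarith
  qed
  have "pconv scale c1 (pconv scale c2 YY) m n =
      Sum_any (\<lambda>x. scale (c1 (fst x) (snd x)) (Sum_any (\<lambda>y. scale (c2 (fst y) (snd y)) (YY (m - int (fst x) - int (fst y)) (n - int (snd x) - int (snd y))))))"
    unfolding pconv_def by (simp add: case_prod_beta)
  also have "\<dots> = Sum_any (\<lambda>(x,y). scale (c1 (fst x) (snd x)) (scale (c2 (fst y) (snd y)) (YY (m - int (fst x) - int (fst y)) (n - int (snd x) - int (snd y)))))"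
  proof (rule SA_scale_inner)
    fix x :: "nat \<times> nat"
    show "finite {y. scale (c2 (fst y) (snd y)) (YY (m - int (fst x) - int (fst y)) (n - int (snd x) - int (snd y))) \<noteq> 0}"
    proof (rule finite_subset[of _ "{..nat (m - M)} \<times> {..nat (n - N)}"])
      show "{y. scale (c2 (fst y) (snd y)) (YY (m - int (fst x) - int (fst y)) (n - int (snd x) - int (snd y))) \<noteq> 0}
          \<subseteq> {..nat (m - M)} \<times> {..nat (n - N)}"
      proof (rule subsetI)
        fix y assume "y \<in> {y. scale (c2 (fst y) (snd y)) (YY (m - int (fst x) - int (fst y)) (n - int (snd x) - int (snd y))) \<noteq> 0}"
        then have "YY (m - int (fst y) - int (fst x)) (n - int (snd y) - int (snd x)) \<noteq> 0" by (simp add: algebra_simps)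
        from key[OF this] show "y \<in> {..nat (m - M)} \<times> {..nat (n - N)}" by (cases y) auto
      qed
    qed simp
  next
    show "finite {(x, y). c1 (fst x) (snd x) \<noteq> 0 \<and> scale (c2 (fst y) (snd y)) (YY (m - int (fst x) - int (fst y)) (n - int (snd x) - int (snd y))) \<noteq> 0}"
    proof (rule finite_subset[of _ "({..nat (m - M)} \<times> {..nat (n - N)}) \<times> ({..nat (m - M)} \<times> {..nat (n - N)})"])
      show "{(x, y). c1 (fst x) (snd x) \<noteq> 0 \<and> scale (c2 (fst y) (snd y)) (YY (m - int (fst x) - int (fst y)) (n - int (snd x) - int (snd y))) \<noteq> 0}
          \<subseteq> ({..nat (m - M)} \<times> {..nat (n - N)}) \<times> ({..nat (m - M)} \<times> {..nat (n - N)})"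
      proof (rule subsetI)
        fix z assume "z \<in> {(x, y). c1 (fst x) (snd x) \<noteq> 0 \<and> scale (c2 (fst y) (snd y)) (YY (m - int (fst x) - int (fst y)) (n - int (snd x) - int (snd y))) \<noteq> 0}"
        then obtain x y where z: "z = (x,y)" and nz: "YY (m - int (fst x) - int (fst y)) (n - int (snd x) - int (snd y)) \<noteq> 0" by auto
        have nz2: "YY (m - int (fst y) - int (fst x)) (n - int (snd y) - int (snd x)) \<noteq> 0" using nz by (simp add: algebra_simps)
        show "z \<in> ({..nat (m - M)} \<times> {..nat (n - N)}) \<times> ({..nat (m - M)} \<times> {..nat (n - N)})"
          using key[OF nz] key[OF nz2] z by (cases x, cases y) auto
      qed
    qed simp
  qed
  finally show ?thesis by simp
qed

lemma pconv_comm: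
  assumes YY: "lex_trunc (\<lambda>n m. YY m n)"
  shows "pconv scale c1 (pconv scale c2 YY) = pconv scale c2 (pconv scale c1 YY)"
proof (intro ext)
  fix m n
  have bij: "bij (\<lambda>(x::nat\<times>nat, y::nat\<times>nat). (y, x))" by (auto intro!: bijI injI simp: image_def)
  have "pconv scale c2 (pconv scale c1 YY) m n =
    Sum_any (\<lambda>(x,y). scale (c2 (fst x) (snd x) * c1 (fst y) (snd y)) (YY (m - int (fst x) - int (fst y)) (n - int (snd x) - int (snd y))))"
    by (rule pconv_expand2[OF YY])
  also have "\<dots> = Sum_any (\<lambda>z. (\<lambda>(x,y). scale (c2 (fst x) (snd x) * c1 (fst y) (snd y)) (YY (m - int (fst x) - int (fst y)) (n - int (snd x) - int (snd y)))) ((\<lambda>(x,y). (y,x)) z))"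
    by (rule SA_bij[symmetric, OF bij])
  also have "\<dots> = Sum_any (\<lambda>(x,y). scale (c1 (fst x) (snd x) * c2 (fst y) (snd y)) (YY (m - int (fst x) - int (fst y)) (n - int (snd x) - int (snd y))))"
    by (rule Sum_any.cong) (auto simp: mult.commute algebra_simps)
  also have "\<dots> = pconv scale c1 (pconv scale c2 YY) m n" by (rule pconv_expand2[OF YY, symmetric])
  finally show "pconv scale c1 (pconv scale c2 YY) m n = pconv scale c2 (pconv scale c1 YY) m n" by simp
qed

end




lemma phi_prod_fin:
  fixes \<phi> :: "complex fls fps"
  assumes phi0: "fps_nth \<phi> 0 = fls_X"
  shows "finite {(k1::int, s::int). (if 0 \<le> k1 \<and> k1 \<le> int k
      then phi_coeff \<phi> (nat k1) (int i) s * phi_coeff \<phi> (k - nat k1) m (t - s) else 0) \<noteq> 0}"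
proof -
  obtain E0 where E0: "\<And>k' m' j. k' \<le> k \<Longrightarrow> 0 \<le> m' \<Longrightarrow> j < m' - E0 \<Longrightarrow> phi_coeff \<phi> k' m' j = 0"
    using phi_B2[OF phi0, of k 0] by blast
  obtain Em where Em: "\<And>k' m' j. k' \<le> k \<Longrightarrow> m \<le> m' \<Longrightarrow> j < m' - Em \<Longrightarrow> phi_coeff \<phi> k' m' j = 0"
    using phi_B2[OF phi0, of k m] by blast
  show ?thesis
  proof (rule finite_subset[of _ "{0..int k} \<times> {int i - E0..t - m + Em}"])
    show "{(k1::int, s::int). (if 0 \<le> k1 \<and> k1 \<le> int k
      then phi_coeff \<phi> (nat k1) (int i) s * phi_coeff \<phi> (k - nat k1) m (t - s) else 0) \<noteq> 0}
      \<subseteq> {0..int k} \<times> {int i - E0..t - m + Em}"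
    proof (rule subsetI)
      fix x assume "x \<in> {(k1::int, s::int). (if 0 \<le> k1 \<and> k1 \<le> int k
        then phi_coeff \<phi> (nat k1) (int i) s * phi_coeff \<phi> (k - nat k1) m (t - s) else 0) \<noteq> 0}"
      then obtain k1 s where x: "x = (k1,s)" and k1: "0 \<le> k1" "k1 \<le> int k"
        and nz: "phi_coeff \<phi> (nat k1) (int i) s \<noteq> 0" "phi_coeff \<phi> (k - nat k1) m (t - s) \<noteq> 0"
        by (cases x) (auto split: if_splits)
      have "nat k1 \<le> k" using k1 by linarith
      then have "\<not> s < int i - E0" using E0[of "nat k1" "int i" s] nz by auto
      moreover have "\<not> t - s < m - Em" using Em[of "k - nat k1" m "t - s"] nz by auto
      ultimately show "x \<in> {0..int k} \<times> {int i - E0..t - m + Em}" using x k1 by simp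
    qed
  qed simp
qed

context cvs
begin

lemma bilin:
  assumes "finite {y. f y \<noteq> 0}" "finite {z. g z \<noteq> 0}"
  shows "scale (Sum_any f) (Sum_any g) = Sum_any (\<lambda>(y,z). scale (f y) (g z))"
proof -
  have "scale (Sum_any f) (Sum_any g) = Sum_any (\<lambda>y. scale (f y) (Sum_any g))"
    by (rule SA_scale_left[OF assms(1)])
  also have "\<dots> = Sum_any (\<lambda>y. Sum_any (\<lambda>z. scale (f y) (g z)))"
    by (rule Sum_any.cong) (rule SA_scale_right[OF assms(2)])
  also have "\<dots> = Sum_any (\<lambda>(y,z). scale (f y) (g z))"
  proof (rule SA_pair, rule finite_subset[of _ "{y. f y \<noteq> 0} \<times> {z. g z \<noteq> 0}"])
    show "{(a, b). scale (f a) (g b) \<noteq> 0} \<subseteq> {y. f y \<noteq> 0} \<times> {z. g z \<noteq> 0}" by auto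
  qed (use assms in simp)
  finally show ?thesis .
qed

lemma QS_lex:
  assumes phi0: "fps_nth \<phi> 0 = fls_X"
  shows "lex_trunc (ext2 (q_subst \<phi> c))"
  unfolding lex_trunc_def
proof (intro conjI allI)
  show "\<exists>N. \<forall>a b. a < N \<longrightarrow> ext2 (q_subst \<phi> c) a b = 0" by (intro exI[of _ 0]) (simp add: ext2_def)
next
  fix a
  obtain E where E: "\<And>k' m' j. k' \<le> nat a \<Longrightarrow> 0 \<le> m' \<Longrightarrow> j < m' - E \<Longrightarrow> phi_coeff \<phi> k' m' j = 0"
    using phi_B2[OF phi0, of "nat a" 0] by blast
  have "q_subst \<phi> c (nat a) b = 0" if "b < - E" for b
    unfolding q_subst_def
  proof (rule SA_zero)
    fix x :: "nat \<times> nat"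
    have "phi_coeff \<phi> (nat a) (int (fst x)) (b - int (snd x)) = 0" using E[of "nat a" "int (fst x)" "b - int (snd x)"] that by simp
    then show "(case x of (i, j) \<Rightarrow> c i j * phi_coeff \<phi> (nat a) (int i) (b - int j)) = 0" by (simp add: split_beta)
  qed
  then show "\<exists>M. \<forall>b. b < M \<longrightarrow> ext2 (q_subst \<phi> c) a b = 0" by (intro exI[of _ "-E"]) (simp add: ext2_def)
qed

lemma SP_lex:
  assumes phi0: "fps_nth \<phi> 0 = fls_X" and F: "lower_trunc2 F"
  shows "lex_trunc (ext2 (subst_phi scale \<phi> F))"
  unfolding lex_trunc_def
proof (intro conjI allI)
  show "\<exists>N. \<forall>a b. a < N \<longrightarrow> ext2 (subst_phi scale \<phi> F) a b = 0" by (intro exI[of _ 0]) (simp add: ext2_def)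
next
  fix a
  obtain NF where NF: "\<And>m n. m < NF \<or> n < NF \<Longrightarrow> F m n = 0" using F unfolding lower_trunc2_def by blast
  obtain E where E: "\<And>k' m' j. k' \<le> nat a \<Longrightarrow> NF \<le> m' \<Longrightarrow> j < m' - E \<Longrightarrow> phi_coeff \<phi> k' m' j = 0"
    using phi_B2[OF phi0, of "nat a" NF] by blast
  have "subst_phi scale \<phi> F (nat a) b = 0" if "b < 2 * NF - E" for b
    unfolding subst_phi_def
  proof (rule SA_zero)
    fix x :: "int \<times> int"
    obtain m n where x: "x = (m,n)" by (cases x)
    have "scale (phi_coeff \<phi> (nat a) m (b - n)) (F m n) = 0"
    proof (cases "m < NF \<or> n < NF")
      case True then show ?thesis using NF by simp
    next
      case False
      then have "phi_coeff \<phi> (nat a) m (b - n) = 0" using E[of "nat a" m "b - n"] that by simp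
      then show ?thesis by simp
    qed
    then show "(case x of (m, n) \<Rightarrow> scale (phi_coeff \<phi> (nat a) m (b - n)) (F m n)) = 0" using x by simp
  qed
  then show "\<exists>M. \<forall>b. b < M \<longrightarrow> ext2 (subst_phi scale \<phi> F) a b = 0"
    by (intro exI[of _ "2 * NF - E"]) (simp add: ext2_def)
qed

end




context cvs
begin

lemma M_lemma:
  assumes phi0: "fps_nth \<phi> 0 = fls_X" and F: "lower_trunc2 F"
  shows "ext2 (subst_phi scale \<phi> (pconv scale c F)) a b
       = conv scale (ext2 (q_subst \<phi> c)) (ext2 (subst_phi scale \<phi> F)) a b"
proof (cases "a < 0")
  case True
  have L: "ext2 (subst_phi scale \<phi> (pconv scale c F)) a b = 0" using True by (simp add: ext2_def)
  have R: "conv scale (ext2 (q_subst \<phi> c)) (ext2 (subst_phi scale \<phi> F)) a b = 0"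
    unfolding conv_def
  proof (rule SA_zero)
    fix x :: "int \<times> int"
    obtain k1 p1 where x: "x = (k1,p1)" by (cases x)
    show "(case x of (k, p) \<Rightarrow> scale (ext2 (q_subst \<phi> c) k p) (ext2 (subst_phi scale \<phi> F) (a - k) (b - p))) = 0"
      using True x by (auto simp: ext2_def)
  qed
  show ?thesis using L R by simp
next
  case False
  define k where "k = nat a"
  have ak: "a = int k" using False k_def by simp
  have ne: "\<phi> $ 0 \<noteq> 0" using phi0 by simp
  obtain NF where NF: "\<And>m n. m < NF \<or> n < NF \<Longrightarrow> F m n = 0" using F unfolding lower_trunc2_def by blast
  obtain E0 where E0: "\<And>k' m' j. k' \<le> k \<Longrightarrow> 0 \<le> m' \<Longrightarrow> j < m' - E0 \<Longrightarrow> phi_coeff \<phi> k' m' j = 0"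
    using phi_B2[OF phi0, of k 0] by blast
  obtain E1 where E1: "\<And>k' m' j. k' \<le> k \<Longrightarrow> NF \<le> m' \<Longrightarrow> j < m' - E1 \<Longrightarrow> phi_coeff \<phi> k' m' j = 0"
    using phi_B2[OF phi0, of k NF] by blast

  define QT where "QT k1 p1 y = (if 0 \<le> k1 then c (fst y) (snd y) * phi_coeff \<phi> (nat k1) (int (fst y)) (p1 - int (snd y)) else 0)"
    for k1 p1 :: int and y :: "nat \<times> nat"
  define ST where "ST a' b' z = (if 0 \<le> a' then scale (phi_coeff \<phi> (nat a') (fst z) (b' - snd z)) (F (fst z) (snd z)) else 0)"
    for a' b' :: int and z :: "int \<times> int"
  have QT_sum: "ext2 (q_subst \<phi> c) k1 p1 = Sum_any (QT k1 p1)" for k1 p1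
    unfolding ext2_def q_subst_def QT_def by (auto simp: split_beta)
  have ST_sum: "ext2 (subst_phi scale \<phi> F) a' b' = Sum_any (ST a' b')" for a' b'
    unfolding ext2_def subst_phi_def ST_def by (auto simp: split_beta)
  have QT_fin: "finite {y. QT k1 p1 y \<noteq> 0}" for k1 p1
  proof (cases "0 \<le> k1")
    case True
    obtain E where E: "\<And>k' m' j. k' \<le> nat k1 \<Longrightarrow> 0 \<le> m' \<Longrightarrow> j < m' - E \<Longrightarrow> phi_coeff \<phi> k' m' j = 0"
      using phi_B2[OF phi0, of "nat k1" 0] by blast
    show ?thesis
    proof (rule finite_subset[of _ "{..nat (p1 + E)} \<times> {..nat (p1 + E)}"])
      show "{y. QT k1 p1 y \<noteq> 0} \<subseteq> {..nat (p1 + E)} \<times> {..nat (p1 + E)}"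
      proof (rule subsetI)
        fix y assume "y \<in> {y. QT k1 p1 y \<noteq> 0}"
        then have "phi_coeff \<phi> (nat k1) (int (fst y)) (p1 - int (snd y)) \<noteq> 0" by (simp add: QT_def split: if_splits)
        then have "\<not> p1 - int (snd y) < int (fst y) - E" using E[of "nat k1" "int (fst y)"] by auto
        then show "y \<in> {..nat (p1 + E)} \<times> {..nat (p1 + E)}" by (cases y) auto
      qed
    qed simp
  next
    case False then show ?thesis by (simp add: QT_def)
  qed
  have ST_fin: "finite {z. ST a' b' z \<noteq> 0}" for a' b'
  proof (cases "0 \<le> a'")
    case True
    obtain E where E: "\<And>k' m' j. k' \<le> nat a' \<Longrightarrow> NF \<le> m' \<Longrightarrow> j < m' - E \<Longrightarrow> phi_coeff \<phi> k' m' j = 0"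
      using phi_B2[OF phi0, of "nat a'" NF] by blast
    show ?thesis
    proof (rule finite_subset[of _ "{NF..b' + E - NF} \<times> {NF..b' + E - NF}"])
      show "{z. ST a' b' z \<noteq> 0} \<subseteq> {NF..b' + E - NF} \<times> {NF..b' + E - NF}"
      proof (rule subsetI)
        fix z assume "z \<in> {z. ST a' b' z \<noteq> 0}"
        then have nz: "phi_coeff \<phi> (nat a') (fst z) (b' - snd z) \<noteq> 0" "F (fst z) (snd z) \<noteq> 0" by (auto simp: ST_def split: if_splits)
        then have "NF \<le> fst z" "NF \<le> snd z" using NF[of "fst z" "snd z"] by linarith+
        moreover have "\<not> b' - snd z < fst z - E" using E[of "nat a'" "fst z"] nz calculation by auto
        ultimately show "z \<in> {NF..b' + E - NF} \<times> {NF..b' + E - NF}" by (cases z) auto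
      qed
    qed simp
  next
    case False then show ?thesis by (simp add: ST_def)
  qed
  define TR where "TR v = scale (QT (fst (fst v)) (snd (fst v)) (fst (snd v))) (ST (a - fst (fst v)) (b - snd (fst v)) (snd (snd v)))"
    for v :: "(int \<times> int) \<times> ((nat \<times> nat) \<times> (int \<times> int))"
  define U where "U = b + E0 + E1 - 2 * NF"
  have TR_fin: "finite {v. TR v \<noteq> 0}"
  proof (rule finite_subset[of _ "({0..a} \<times> {-E0..b - 2*NF + E1}) \<times> (({..nat U} \<times> {..nat U}) \<times> ({NF..U+NF} \<times> {NF..U+NF}))"])
    show "{v. TR v \<noteq> 0} \<subseteq> ({0..a} \<times> {-E0..b - 2*NF + E1}) \<times> (({..nat U} \<times> {..nat U}) \<times> ({NF..U+NF} \<times> {NF..U+NF}))"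
    proof (rule subsetI)
      fix v assume "v \<in> {v. TR v \<noteq> 0}"
      then have nzv: "TR v \<noteq> 0" by simp
      obtain k1 p1 i j m' n' where v: "v = ((k1,p1),((i,j),(m',n')))" by (metis prod.exhaust)
      have nz: "0 \<le> k1" "0 \<le> a - k1" "phi_coeff \<phi> (nat k1) (int i) (p1 - int j) \<noteq> 0"
        "phi_coeff \<phi> (nat (a - k1)) m' (b - p1 - n') \<noteq> 0" "F m' n' \<noteq> 0"
        using nzv by (auto simp: TR_def QT_def ST_def v split: if_splits)
      have kk: "nat k1 \<le> k" "nat (a - k1) \<le> k" using nz(1,2) ak by linarith+
      have mn: "NF \<le> m'" "NF \<le> n'" using NF[of m' n'] nz(5) by linarith+
      have c1: "\<not> p1 - int j < int i - E0" using E0[of "nat k1" "int i" "p1 - int j"] kk nz(3) by auto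
      have c2: "\<not> b - p1 - n' < m' - E1" using E1[of "nat (a - k1)" m' "b - p1 - n'"] kk mn nz(4) by auto
      have "int i \<le> U" "int j \<le> U" "m' \<le> U + NF" "n' \<le> U + NF" "-E0 \<le> p1" "p1 \<le> b - 2*NF + E1"
        using c1 c2 mn unfolding U_def by linarith+
      then show "v \<in> ({0..a} \<times> {-E0..b - 2*NF + E1}) \<times> (({..nat U} \<times> {..nat U}) \<times> ({NF..U+NF} \<times> {NF..U+NF}))"
        using v nz(1,2) mn by auto
    qed
  qed simp
  have RHS: "conv scale (ext2 (q_subst \<phi> c)) (ext2 (subst_phi scale \<phi> F)) a b = Sum_any TR"
  proof -
    have "conv scale (ext2 (q_subst \<phi> c)) (ext2 (subst_phi scale \<phi> F)) a b
        = Sum_any (\<lambda>x. scale (Sum_any (QT (fst x) (snd x))) (Sum_any (ST (a - fst x) (b - snd x))))"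
      unfolding conv_def QT_sum ST_sum by (simp add: split_beta)
    also have "\<dots> = Sum_any (\<lambda>x. Sum_any (\<lambda>yz. TR (x, yz)))"
      by (rule Sum_any.cong) (simp add: bilin[OF QT_fin ST_fin] TR_def split_beta)
    also have "\<dots> = Sum_any (\<lambda>(x,yz). TR (x, yz))"
      by (rule SA_pair) (rule finite_subset[OF _ TR_fin], auto)
    finally show ?thesis by simp
  qed
  define PT where "PT w ks = (case ks of (k1, s) \<Rightarrow> if 0 \<le> k1 \<and> k1 \<le> int k
      then phi_coeff \<phi> (nat k1) (int (fst (snd w))) s * phi_coeff \<phi> (k - nat k1) (fst (fst w) - int (fst (snd w))) (b - snd (fst w) - s)
      else 0) * c (fst (snd w)) (snd (snd w))"
    for w :: "(int \<times> int) \<times> (nat \<times> nat)" and ks :: "int \<times> int"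
  define FV where "FV w = F (fst (fst w) - int (fst (snd w))) (snd (fst w) - int (snd (snd w)))"
    for w :: "(int \<times> int) \<times> (nat \<times> nat)"
  define TL where "TL u = scale (PT (fst u) (snd u)) (FV (fst u))"
    for u :: "((int \<times> int) \<times> (nat \<times> nat)) \<times> (int \<times> int)"
  define l where "l = (\<lambda>((k1::int,p1::int),((i::nat,j::nat),(m'::int,n'::int))). (((m' + int i, n' + int j),(i,j)),(k1, p1 - int j)))"
  define l' where "l' = (\<lambda>(((m::int,n::int),(i::nat,j::nat)),(k1::int,s::int)). ((k1, s + int j),((i,j),(m - int i, n - int j))))"
  have ll': "l (l' u) = u" for u
  proof -
    obtain m n i j k1 s where "u = (((m,n),(i,j)),(k1,s))" by (metis prod.exhaust)
    then show ?thesis by (simp add: l_def l'_def)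
  qed
  have l'l: "l' (l v) = v" for v
  proof -
    obtain k1 p1 i j m' n' where "v = ((k1,p1),((i,j),(m',n')))" by (metis prod.exhaust)
    then show ?thesis by (simp add: l_def l'_def)
  qed
  have bij: "bij l" by (rule o_bij[of l' l]) (simp_all add: fun_eq_iff ll' l'l)
  have TL_l: "TL (l v) = TR v" for v
  proof -
    obtain k1 p1 i j m' n' where v: "v = ((k1,p1),((i,j),(m',n')))" by (metis prod.exhaust)
    show ?thesis
    proof (cases "0 \<le> k1 \<and> k1 \<le> int k")
      case True
      define k1' where "k1' = nat k1"
      have k1': "k1 = int k1'" "k1' \<le> k" using True unfolding k1'_def by auto
      have e1: "nat (int k - int k1') = k - k1'" by simp
      have ar: "b - (n' + int j) - (p1 - int j) = b - p1 - n'" by simp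
      have ar2: "m' + int i - int i = m'" "n' + int j - int j = n'" by simp_all
      have nn: "0 \<le> int k - int k1'" using k1' by simp
      have L: "TL (l v) = scale ((phi_coeff \<phi> k1' (int i) (p1 - int j) * phi_coeff \<phi> (k - k1') m' (b - p1 - n')) * c i j) (F m' n')"
        using k1' by (simp add: v l_def TL_def PT_def FV_def ar ar2)
      have R: "TR v = scale (c i j * phi_coeff \<phi> k1' (int i) (p1 - int j)) (scale (phi_coeff \<phi> (k - k1') m' (b - p1 - n')) (F m' n'))"
        using k1' nn by (simp add: v TR_def QT_def ST_def ak e1)
      show ?thesis by (simp add: L R mult_ac)
    next
      case False
      have L: "TL (l v) = 0" using False by (simp add: v l_def TL_def PT_def) blast
      have R: "TR v = 0"
      proof (cases "k1 < 0")
        case True then show ?thesis by (simp add: v TR_def QT_def)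
      next
        case False2: False
        then have "a - k1 < 0" using False ak by simp
        then show ?thesis by (simp add: v TR_def ST_def)
      qed
      show ?thesis using L R by simp
    qed
  qed
  have supp: "{u. TL u \<noteq> 0} = l ` {v. TR v \<noteq> 0}"
  proof
    show "{u. TL u \<noteq> 0} \<subseteq> l ` {v. TR v \<noteq> 0}"
    proof
      fix u assume u: "u \<in> {u. TL u \<noteq> 0}"
      have e: "TL u = TR (l' u)" using TL_l[of "l' u"] unfolding ll' .
      have nz: "TR (l' u) \<noteq> 0" using u e by simp
      show "u \<in> l ` {v. TR v \<noteq> 0}" by (rule image_eqI[where x="l' u"]) (simp_all add: ll' nz)
    qed
  next
    show "l ` {v. TR v \<noteq> 0} \<subseteq> {u. TL u \<noteq> 0}"
    proof
      fix u assume "u \<in> l ` {v. TR v \<noteq> 0}"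
      then obtain v where "u = l v" "TR v \<noteq> 0" by blast
      then show "u \<in> {u. TL u \<noteq> 0}" using TL_l[of v] by simp
    qed
  qed
  have TL_fin: "finite {u. TL u \<noteq> 0}" unfolding supp using TR_fin by simp
  define U1 where "U1 = b + E1 - 2 * NF"
  have keyF: "NF \<le> m - int i \<and> NF \<le> n - int j" if "F (m - int i) (n - int j) \<noteq> 0" for m n i j
    using NF[of "m - int i" "n - int j"] that by linarith
  have LHS1: "ext2 (subst_phi scale \<phi> (pconv scale c F)) a b =
     Sum_any (\<lambda>(mn,ij). scale (phi_coeff \<phi> k (fst mn) (b - snd mn)) (scale (c (fst ij) (snd ij)) (F (fst mn - int (fst ij)) (snd mn - int (snd ij)))))"
  proof -
    have "ext2 (subst_phi scale \<phi> (pconv scale c F)) a b = Sum_any (\<lambda>mn. scale (phi_coeff \<phi> k (fst mn) (b - snd mn))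
       (Sum_any (\<lambda>ij. scale (c (fst ij) (snd ij)) (F (fst mn - int (fst ij)) (snd mn - int (snd ij))))))"
      unfolding ext2_def subst_phi_def pconv_def using False k_def by (simp add: split_beta)
    also have "\<dots> = Sum_any (\<lambda>(mn,ij). scale (phi_coeff \<phi> k (fst mn) (b - snd mn)) (scale (c (fst ij) (snd ij)) (F (fst mn - int (fst ij)) (snd mn - int (snd ij)))))"
    proof (rule SA_scale_inner)
      fix mn :: "int \<times> int"
      show "finite {ij. scale (c (fst ij) (snd ij)) (F (fst mn - int (fst ij)) (snd mn - int (snd ij))) \<noteq> 0}"
      proof (rule finite_subset[of _ "{..nat (fst mn - NF)} \<times> {..nat (snd mn - NF)}"])
        show "{ij. scale (c (fst ij) (snd ij)) (F (fst mn - int (fst ij)) (snd mn - int (snd ij))) \<noteq> 0}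
            \<subseteq> {..nat (fst mn - NF)} \<times> {..nat (snd mn - NF)}"
        proof
          fix ij assume "ij \<in> {ij. scale (c (fst ij) (snd ij)) (F (fst mn - int (fst ij)) (snd mn - int (snd ij))) \<noteq> 0}"
          then have "F (fst mn - int (fst ij)) (snd mn - int (snd ij)) \<noteq> 0" by simp
          from keyF[OF this] show "ij \<in> {..nat (fst mn - NF)} \<times> {..nat (snd mn - NF)}" by (cases ij) auto
        qed
      qed simp
    next
      show "finite {(mn, ij). phi_coeff \<phi> k (fst mn) (b - snd mn) \<noteq> 0 \<and> scale (c (fst ij) (snd ij)) (F (fst mn - int (fst ij)) (snd mn - int (snd ij))) \<noteq> 0}"
      proof (rule finite_subset[of _ "({NF..b+E1-NF} \<times> {NF..b+E1-NF}) \<times> ({..nat U1} \<times> {..nat U1})"])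
        show "{(mn, ij). phi_coeff \<phi> k (fst mn) (b - snd mn) \<noteq> 0 \<and> scale (c (fst ij) (snd ij)) (F (fst mn - int (fst ij)) (snd mn - int (snd ij))) \<noteq> 0}
          \<subseteq> ({NF..b+E1-NF} \<times> {NF..b+E1-NF}) \<times> ({..nat U1} \<times> {..nat U1})"
        proof
          fix x assume "x \<in> {(mn, ij). phi_coeff \<phi> k (fst mn) (b - snd mn) \<noteq> 0 \<and> scale (c (fst ij) (snd ij)) (F (fst mn - int (fst ij)) (snd mn - int (snd ij))) \<noteq> 0}"
          obtain m n i j where x: "x = ((m,n),(i,j))" by (metis prod.exhaust)
          have nz: "phi_coeff \<phi> k m (b - n) \<noteq> 0" "F (m - int i) (n - int j) \<noteq> 0"
            using \<open>x \<in> _\<close> unfolding x by auto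
          have k1: "NF \<le> m - int i" "NF \<le> n - int j" using keyF[OF nz(2)] by auto
          have "\<not> b - n < m - E1" using E1[of k m "b - n"] nz(1) k1 by auto
          then have "int i \<le> U1" "int j \<le> U1" "m \<le> b + E1 - NF" "n \<le> b + E1 - NF" "NF \<le> m" "NF \<le> n"
            using k1 unfolding U1_def by linarith+
          then show "x \<in> ({NF..b+E1-NF} \<times> {NF..b+E1-NF}) \<times> ({..nat U1} \<times> {..nat U1})" using x by auto
        qed
      qed simp
    qed
    finally show ?thesis .
  qed
  have LHS2: "ext2 (subst_phi scale \<phi> (pconv scale c F)) a b = Sum_any TL"
  proof -
    have "ext2 (subst_phi scale \<phi> (pconv scale c F)) a b = Sum_any (\<lambda>w. scale (Sum_any (PT w)) (FV w))"
      unfolding LHS1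
    proof (rule Sum_any.cong)
      fix w :: "(int \<times> int) \<times> (nat \<times> nat)"
      obtain m n i j where w: "w = ((m,n),(i,j))" by (metis prod.exhaust)
      have "phi_coeff \<phi> k m (b - n) = phi_coeff \<phi> k ((m - int i) + int i) (b - n)" by simp
      also have "\<dots> = Sum_any (\<lambda>(k1::int, s::int). if 0 \<le> k1 \<and> k1 \<le> int k
          then phi_coeff \<phi> (nat k1) (int i) s * phi_coeff \<phi> (k - nat k1) (m - int i) (b - n - s) else 0)"
        by (rule phi_prod[OF ne])
      moreover have fin: "finite {x. (\<lambda>(k1::int, s::int). if 0 \<le> k1 \<and> k1 \<le> int k
          then phi_coeff \<phi> (nat k1) (int i) s * phi_coeff \<phi> (k - nat k1) (m - int i) (b - n - s) else 0) x \<noteq> 0}"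
        by (rule finite_subset[OF _ phi_prod_fin[OF phi0, of k i "m - int i" "b - n"]]) (auto split: if_splits)
      have pt: "Sum_any (PT w) = Sum_any (\<lambda>x. (\<lambda>(k1::int, s::int). if 0 \<le> k1 \<and> k1 \<le> int k
          then phi_coeff \<phi> (nat k1) (int i) s * phi_coeff \<phi> (k - nat k1) (m - int i) (b - n - s) else 0) x * c i j)"
        by (rule Sum_any.cong) (simp add: PT_def w split_beta)
      ultimately have "phi_coeff \<phi> k m (b - n) * c i j = Sum_any (PT w)"
        unfolding pt using Sum_any_left_distrib[OF fin, of "c i j"] by simp
      then show "(case w of (mn, ij) \<Rightarrow> scale (phi_coeff \<phi> k (fst mn) (b - snd mn)) (scale (c (fst ij) (snd ij)) (F (fst mn - int (fst ij)) (snd mn - int (snd ij)))))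
          = scale (Sum_any (PT w)) (FV w)"
        by (simp add: w FV_def)
    qed
    also have "\<dots> = Sum_any (\<lambda>(w,ks). scale (PT w ks) (FV w))"
    proof (rule SA_scale_inner_left)
      fix w :: "(int \<times> int) \<times> (nat \<times> nat)"
      obtain m n i j where w: "w = ((m,n),(i,j))" by (metis prod.exhaust)
      show "finite {ks. PT w ks \<noteq> 0}"
      proof (rule finite_subset[OF _ phi_prod_fin[OF phi0, of k i "m - int i" "b - n"]], rule subsetI)
        fix x assume "x \<in> {ks. PT w ks \<noteq> 0}"
        moreover obtain k1 s where x: "x = (k1,s)" by (cases x)
        ultimately have "(if 0 \<le> k1 \<and> k1 \<le> int k
           then phi_coeff \<phi> (nat k1) (int i) s * phi_coeff \<phi> (k - nat k1) (m - int i) (b - n - s) else 0) \<noteq> 0"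
          by (auto simp: PT_def w split_beta split: if_splits)
        then show "x \<in> {(k1::int, s::int). (if 0 \<le> k1 \<and> k1 \<le> int k
           then phi_coeff \<phi> (nat k1) (int i) s * phi_coeff \<phi> (k - nat k1) (m - int i) (b - n - s) else 0) \<noteq> 0}"
          using x by simp
      qed
    next
      show "finite {(w, ks). PT w ks \<noteq> 0 \<and> FV w \<noteq> 0}"
        by (rule finite_subset[OF _ TL_fin]) (auto simp: TL_def)
    qed
    also have "\<dots> = Sum_any TL" by (simp add: TL_def split_beta)
    finally show ?thesis .
  qed
  have "Sum_any TL = Sum_any (\<lambda>v. TL (l v))" by (rule SA_bij[symmetric, OF bij])
  also have "\<dots> = Sum_any TR" by (simp add: TL_l)
  finally show ?thesis using LHS2 RHS by simp
qed

end




lemma lin0: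
  assumes "Vector_Spaces.linear s1 s2 f"
  shows "f 0 = 0"
proof -
  have "f (0 + 0) = f 0 + f 0" using assms unfolding Vector_Spaces.linear_iff by blast
  then show ?thesis by simp
qed

theorem lemma3p6:
  fixes \<phi> :: "complex fls fps"
    and scV :: "complex \<Rightarrow> 'v::ab_group_add \<Rightarrow> 'v"
    and Y :: "'v \<Rightarrow> 'v \<Rightarrow> int \<Rightarrow> 'v"
    and one :: 'v
    and scW :: "complex \<Rightarrow> 'w::ab_group_add \<Rightarrow> 'w"
    and YW :: "'v \<Rightarrow> 'w \<Rightarrow> int \<Rightarrow> 'w"
    and u v :: 'v
    and q :: "nat \<Rightarrow> nat \<Rightarrow> complex"
  assumes "is_associate \<phi>"
    and "nonlocal_va scV Y one"
    and "phi_quasi_module \<phi> Y one scV scW YW"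
    and "\<forall>w. lower_trunc2 (qYY scW q YW u v w)"
  shows "assoc_identity scW \<phi> q Y YW u v"
proof -
  have phi0: "fps_nth \<phi> 0 = fls_X" using assms(1) unfolding is_associate_def by blast
  have Ylt: "\<And>u v. lower_trunc (Y u v)" using assms(2) unfolding nonlocal_va_def by blast
  have vsW: "Vector_Spaces.vector_space scW" using assms(3) unfolding phi_quasi_module_def by blast
  have YWlt: "\<And>u w. lower_trunc (YW u w)" using assms(3) unfolding phi_quasi_module_def by blast
  obtain p where pnz: "\<exists>k j. q_subst \<phi> p k j \<noteq> 0" and pL: "\<forall>w. lower_trunc2 (qYY scW p YW u v w)"
    and pA: "assoc_identity scW \<phi> p Y YW u v"
    using assms(3) unfolding phi_quasi_module_def by blast
  interpret W: cvs scW by (simp add: cvs_def vsW)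
  show ?thesis unfolding assoc_identity_def
  proof (intro allI)
    fix w a b
    define G where "G = (\<lambda>a b. YW (Y u v a) w b)"
    define YY where "YY = (\<lambda>m n. YW u (YW v w n) m)"
    define A where "A = ext2 (q_subst \<phi> q)"
    define P where "P = ext2 (q_subst \<phi> p)"
    define R where "R = pconv scW p YY"
    define Q where "Q = pconv scW q YY"
    have RR: "qYY scW p YW u v w = R" unfolding R_def YY_def by (rule qYY_pconv)
    have QQ: "qYY scW q YW u v w = Q" unfolding Q_def YY_def by (rule qYY_pconv)
    have RL: "lower_trunc2 R" using pL RR by metis
    have QL: "lower_trunc2 Q" using assms(4) QQ by metis
    have G_lex: "lex_trunc G" unfolding lex_trunc_def G_def
    proof (intro conjI allI)
      obtain N where "\<forall>n<N. Y u v n = 0" using Ylt[of u v] unfolding lower_trunc_def by blast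
      moreover have "YW 0 w b = 0" for b
        using assms(3) unfolding phi_quasi_module_def by (intro lin0[of scV scW "\<lambda>u. YW u w b"]) blast
      ultimately show "\<exists>N. \<forall>a b. a < N \<longrightarrow> YW (Y u v a) w b = 0"
        by (intro exI[of _ N]) auto
    next
      fix a show "\<exists>M. \<forall>b. b < M \<longrightarrow> YW (Y u v a) w b = 0" using YWlt[of "Y u v a" w] unfolding lower_trunc_def by blast
    qed
    have YY_lex: "lex_trunc (\<lambda>n m. YY m n)" unfolding lex_trunc_def YY_def
    proof (intro conjI allI)
      obtain N where "\<forall>n<N. YW v w n = 0" using YWlt[of v w] unfolding lower_trunc_def by blast
      moreover have "YW u 0 b = 0" for b
        using assms(3) unfolding phi_quasi_module_def by (intro lin0[of scW scW "\<lambda>w. YW u w b"]) blast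
      ultimately show "\<exists>N. \<forall>a b. a < N \<longrightarrow> YW u (YW v w a) b = 0"
        by (intro exI[of _ N]) auto
    next
      fix n show "\<exists>M. \<forall>b. b < M \<longrightarrow> YW u (YW v w n) b = 0" using YWlt[of u "YW v w n"] unfolding lower_trunc_def by blast
    qed
    have A_lex: "lex_trunc A" unfolding A_def by (rule W.QS_lex[OF phi0])
    have P_lex: "lex_trunc P" unfolding P_def by (rule W.QS_lex[OF phi0])
    obtain k0 j0 where Pnz: "P (int k0) j0 \<noteq> 0" using pnz unfolding P_def ext2_def by auto
    have hyp: "conv scW P G = ext2 (subst_phi scW \<phi> R)"
    proof (intro ext)
      fix a b
      show "conv scW P G a b = ext2 (subst_phi scW \<phi> R) a b"
        using pA W.qYW_Y_conv[of \<phi> p Y YW u v w a b] unfolding assoc_identity_def P_def G_def RR[symmetric]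
        by (simp add: ext2_def)
    qed
    have "conv scW P (conv scW A G) = conv scW A (conv scW P G)"
      by (rule W.conv_comm[OF P_lex A_lex G_lex])
    also have "\<dots> = conv scW A (ext2 (subst_phi scW \<phi> R))" using hyp by simp
    also have "\<dots> = ext2 (subst_phi scW \<phi> (pconv scW q R))"
      unfolding A_def by (intro ext) (rule W.M_lemma[OF phi0 RL, symmetric])
    also have "pconv scW q R = pconv scW p Q" unfolding R_def Q_def by (rule W.pconv_comm[OF YY_lex])
    also have "ext2 (subst_phi scW \<phi> (pconv scW p Q)) = conv scW P (ext2 (subst_phi scW \<phi> Q))"
      unfolding P_def by (intro ext) (rule W.M_lemma[OF phi0 QL])
    finally have eq: "conv scW P (conv scW A G) = conv scW P (ext2 (subst_phi scW \<phi> Q))" .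
    have main: "conv scW A G = ext2 (subst_phi scW \<phi> Q)"
      by (rule W.conv_cancel[OF P_lex Pnz W.conv_lex[OF A_lex G_lex] W.SP_lex[OF phi0 QL] eq])
    have "qYW_Y scW \<phi> q Y YW u v w a b = conv scW A G a b"
      unfolding A_def G_def by (rule W.qYW_Y_conv)
    also have "\<dots> = ext2 (subst_phi scW \<phi> Q) a b" using main by simp
    finally show "qYW_Y scW \<phi> q Y YW u v w a b =
        (if a < 0 then 0 else subst_phi scW \<phi> (qYY scW q YW u v w) (nat a) b)"
      unfolding QQ by (simp add: ext2_def)
  qed
qed


end
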